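(* Let $G$ and $H$ be rooted graphs. Then for any integers $g,j\ge 0$ and $h\ge 1$, \begin{align*} X_{S_j^{gh}(G,H)}&=\sum_{i=0}^{j}X_{P_i}\,X_{P^{g+h+j-i}(G,H)}-\sum_{i=1}^{j}X_{G^{g+i-1}}\,X_{H^{h+j-i}},\quad\text{and}\\ X_{S_{hj}^{g}(G)}&=\sum_{i=0}^{j}X_{P_i}\,X_{G^{g+j-i+h}}-\sum_{i=1}^{j}X_{P_{i+h}}\,X_{G^{g+j-i}}. \end{align*}
   Context: All graphs are finite simple graphs. The chromatic symmetric function of a graph $G$ is $X_G=\sum_{\kappa}\prod_{v\in V(G)}x_{\kappa(v)}$, where $\kappa$ ranges over proper colorings $\kappa:V(G)\to\{1,2,\dots\}$; the empty graph has $X=1$. $P_i$ is the path on $i$ vertices ($P_0$ empty). For nonnegative integers $\tau_1,\tau_2,\tau_3$ and rooted graphs $(G_i,u_i)$, $S^{\tau_1\tau_2\tau_3}(G_1,G_2,G_3)$ is obtained by taking a center vertex $c$ and three paths from $c$, disjoint except at $c$, of lengths $\tau_1,\tau_2,\tau_3$, and identifying $u_i$ with the far end of the $i$-th path (with $c$ if $\tau_i=0$), the $G_i$ being disjoint. Notation: $S_j^{gh}(G,H)=S^{ghj}(G,H,K_1)$ and $S_{hj}^g(G)=S^{ghj}(G,K_1,K_1)$ (legs ending in a single vertex are plain paths). For rooted graphs $(G,u)$, $(H,v)$ and $k\ge0$, $P^k(G,H)$ is obtained from the disjoint union of $G$ and $H$ by adding a path of length $k$ joining $u$ and $v$ (for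 $k=0$ identifying them), and $G^k=P^k(G,K_1)$ is $G$ with a pendant path of length $k$ at its root. *)

theory Defs
  imports "HOL-Library.Poly_Mapping" "HOL-Library.FuncSet"
begin

type_synonym 'v graph = "'v set \<times> 'v set set"
type_synonym 'v rgraph = "'v graph \<times> 'v"

definition wf_graph :: "'v graph \<Rightarrow> bool" where
  "wf_graph Gr \<longleftrightarrow> finite (fst Gr) \<and> (\<forall>e\<in>snd Gr. e \<subseteq> fst Gr \<and> card e = 2)"

definition wf_rgraph :: "'v rgraph \<Rightarrow> bool" where
  "wf_rgraph R \<longleftrightarrow> wf_graph (fst R) \<and> snd R \<in> fst (fst R)"

text \<open>A symmetric function (formal power series in x_0, x_1, ...) is represented by its
coefficient function on monomials; a monomial is a finitely supported exponent vector.\<close>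
type_synonym sf = "(nat \<Rightarrow>\<^sub>0 nat) \<Rightarrow> int"

definition proper_col :: "'v graph \<Rightarrow> ('v \<Rightarrow> nat) \<Rightarrow> bool" where
  "proper_col Gr \<kappa> \<longleftrightarrow> (\<forall>x y. {x, y} \<in> snd Gr \<longrightarrow> \<kappa> x \<noteq> \<kappa> y)"

text \<open>Coefficient of x^m in X_G: the number of proper colourings
  \<kappa> : V \<rightarrow> {1,2,...} in which colour c is used exactly m(c) times.\<close>
definition csf :: "'v graph \<Rightarrow> sf" where
  "csf Gr m = int (card {\<kappa> \<in> fst Gr \<rightarrow>\<^sub>E {1..}. proper_col Gr \<kappa> \<and>
                         (\<forall>c. card {v \<in> fst Gr. \<kappa> v = c} = Poly_Mapping.lookup m c)})"

definition sf_mult :: "sf \<Rightarrow> sf \<Rightarrow> sf" where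
  "sf_mult F G m = (\<Sum>p \<in> {(a, b). a + b = m}. F (fst p) * G (snd p))"

definition path_graph :: "nat \<Rightarrow> nat graph" where
  "path_graph n = ({0..<n}, {{i, Suc i} | i. Suc i < n})"

definition K1 :: "unit rgraph" where
  "K1 = (({()}, {}), ())"

text \<open>A path of length t from a to b with inner vertices mid 1, ..., mid (t-1).\<close>
definition pathpt :: "'w \<Rightarrow> 'w \<Rightarrow> (nat \<Rightarrow> 'w) \<Rightarrow> nat \<Rightarrow> nat \<Rightarrow> 'w" where
  "pathpt a b mid t s = (if s = 0 then a else if s = t then b else mid s)"

definition leg_V :: "'w \<Rightarrow> 'w \<Rightarrow> (nat \<Rightarrow> 'w) \<Rightarrow> nat \<Rightarrow> 'w set" where
  "leg_V a b mid t = pathpt a b mid t ` {0..t}"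

definition leg_E :: "'w \<Rightarrow> 'w \<Rightarrow> (nat \<Rightarrow> 'w) \<Rightarrow> nat \<Rightarrow> 'w set set" where
  "leg_E a b mid t = {{pathpt a b mid t s, pathpt a b mid t (Suc s)} | s. s < t}"

text \<open>P^k(G,H): disjoint union of G and H plus a path of length k joining the roots
  (roots identified when k = 0).\<close>
definition Pk :: "nat \<Rightarrow> 'a rgraph \<Rightarrow> 'b rgraph \<Rightarrow> (('a + 'b) + nat) graph" where
  "Pk k G H =
    (let u = snd G; v = snd H;
         embG = (\<lambda>x. Inl (Inl x));
         embH = (\<lambda>y. if k = 0 \<and> y = v then Inl (Inl u) else Inl (Inr y));
         a = embG u; b = embH v; mid = (\<lambda>s. Inr s)
     in (embG ` fst (fst G) \<union> embH ` fst (fst H) \<union> leg_V a b mid k,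
         (\<lambda>e. embG ` e) ` snd (fst G) \<union> (\<lambda>e. embH ` e) ` snd (fst H) \<union> leg_E a b mid k))"

text \<open>G^k = P^k(G, K1): G with a pendant path of length k at its root.\<close>
definition pend :: "'a rgraph \<Rightarrow> nat \<Rightarrow> (('a + unit) + nat) graph" where
  "pend G k = Pk k G K1"

text \<open>S^{t1 t2 t3}(G1,G2,G3): centre c = Inr (0,0), three legs of lengths t1,t2,t3 from c,
  the root of G_i identified with the far end of leg i (with c when t_i = 0).\<close>
definition star :: "nat \<Rightarrow> nat \<Rightarrow> nat \<Rightarrow> 'a rgraph \<Rightarrow> 'b rgraph \<Rightarrow> 'c rgraph
                    \<Rightarrow> (('a + 'b + 'c) + nat \<times> nat) graph" where
  "star t1 t2 t3 G1 G2 G3 =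
    (let c = Inr (0, 0); u1 = snd G1; u2 = snd G2; u3 = snd G3;
         emb1 = (\<lambda>x. if t1 = 0 \<and> x = u1 then c else Inl (Inl x));
         emb2 = (\<lambda>x. if t2 = 0 \<and> x = u2 then c else Inl (Inr (Inl x)));
         emb3 = (\<lambda>x. if t3 = 0 \<and> x = u3 then c else Inl (Inr (Inr x)))
     in ({c} \<union> emb1 ` fst (fst G1) \<union> emb2 ` fst (fst G2) \<union> emb3 ` fst (fst G3)
           \<union> leg_V c (emb1 u1) (\<lambda>s. Inr (1, s)) t1
           \<union> leg_V c (emb2 u2) (\<lambda>s. Inr (2, s)) t2
           \<union> leg_V c (emb3 u3) (\<lambda>s. Inr (3, s)) t3,
         (\<lambda>e. emb1 ` e) ` snd (fst G1) \<union> (\<lambda>e. emb2 ` e) ` snd (fst G2)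
           \<union> (\<lambda>e. emb3 ` e) ` snd (fst G3)
           \<union> leg_E c (emb1 u1) (\<lambda>s. Inr (1, s)) t1
           \<union> leg_E c (emb2 u2) (\<lambda>s. Inr (2, s)) t2
           \<union> leg_E c (emb3 u3) (\<lambda>s. Inr (3, s)) t3))"

text \<open>S_j^{gh}(G,H) = S^{ghj}(G,H,K1) and S_{hj}^g(G) = S^{ghj}(G,K1,K1).\<close>
definition S2 :: "nat \<Rightarrow> nat \<Rightarrow> nat \<Rightarrow> 'a rgraph \<Rightarrow> 'b rgraph \<Rightarrow> (('a + 'b + unit) + nat \<times> nat) graph" where
  "S2 g h j G H = star g h j G H K1"

definition S1 :: "nat \<Rightarrow> nat \<Rightarrow> nat \<Rightarrow> 'a rgraph \<Rightarrow> (('a + unit + unit) + nat \<times> nat) graph" where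
  "S1 g h j G = star g h j G K1 K1"

end

theory Submission
  imports Defs
begin

definition Col :: "'v graph \<Rightarrow> (nat \<Rightarrow>\<^sub>0 nat) \<Rightarrow> ('v \<Rightarrow> nat) set" where
  "Col X m = {\<kappa> \<in> fst X \<rightarrow>\<^sub>E {1..}. proper_col X \<kappa> \<and>
                         (\<forall>c. card {v \<in> fst X. \<kappa> v = c} = Poly_Mapping.lookup m c)}"

lemma csf_Col: "csf X m = int (card (Col X m))"
  by (simp add: csf_def Col_def)

lemma Col_finite:
  assumes "finite (fst X)" shows "finite (Col X m)"
proof -
  have "Col X m \<subseteq> PiE (fst X) (\<lambda>_. Poly_Mapping.keys m)"
  proof
    fix \<kappa> assume k: "\<kappa> \<in> Col X m"
    show "\<kappa> \<in> PiE (fst X) (\<lambda>_. Poly_Mapping.keys m)"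
    proof (rule PiE_I)
      fix v assume v: "v \<in> fst X"
      have "{w \<in> fst X. \<kappa> w = \<kappa> v} \<noteq> {}" using v by auto
      then have "card {w \<in> fst X. \<kappa> w = \<kappa> v} \<noteq> 0" using assms by simp
      then show "\<kappa> v \<in> Poly_Mapping.keys m" using k by (simp add: Col_def in_keys_iff)
    next
      fix v assume "v \<notin> fst X" then show "\<kappa> v = undefined" using k by (auto simp: Col_def)
    qed
  qed
  moreover have "finite (PiE (fst X) (\<lambda>_. Poly_Mapping.keys m))"
    using assms by (simp add: finite_PiE)
  ultimately show ?thesis by (rule finite_subset)
qed

lemma proper_insert:
  "proper_col (V, insert {a, b} E) \<kappa> \<longleftrightarrow> proper_col (V, E) \<kappa> \<and> \<kappa> a \<noteq> \<kappa> b"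
  unfolding proper_col_def by (auto simp: doubleton_eq_iff)

lemma Col_insert:
  "Col (V, insert {a, b} E) m = {\<kappa> \<in> Col (V, E) m. \<kappa> a \<noteq> \<kappa> b}"
  unfolding Col_def by (auto simp: proper_insert)

lemma csf_swap:
  assumes "finite V"
  shows "csf (V, insert {c,w} (insert {c,x} D)) m - csf (V, insert {c,x} D) m
       = csf (V, insert {c,w} (insert {w,x} D)) m - csf (V, insert {w,x} D) m"
proof -
  have fin: "finite (Col (V, E) m)" for E using Col_finite[of "(V,E)"] assms by simp
  have split: "int (card (Col (V, E) m)) = int (card {\<kappa> \<in> Col (V, E) m. \<kappa> c \<noteq> \<kappa> w})
      + int (card {\<kappa> \<in> Col (V, E) m. \<kappa> c = \<kappa> w})" for E
  proof -
    have "Col (V, E) m = {\<kappa> \<in> Col (V, E) m. \<kappa> c \<noteq> \<kappa> w} \<union> {\<kappa> \<in> Col (V, E) m. \<kappa> c = \<kappa> w}" by auto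
    then have "card (Col (V, E) m) = card ({\<kappa> \<in> Col (V, E) m. \<kappa> c \<noteq> \<kappa> w} \<union> {\<kappa> \<in> Col (V, E) m. \<kappa> c = \<kappa> w})" by simp
    also have "\<dots> = card {\<kappa> \<in> Col (V, E) m. \<kappa> c \<noteq> \<kappa> w} + card {\<kappa> \<in> Col (V, E) m. \<kappa> c = \<kappa> w}"
      by (rule card_Un_disjoint) (use fin in auto)
    finally show ?thesis by simp
  qed
  have eq: "{\<kappa> \<in> Col (V, insert {c,x} D) m. \<kappa> c = \<kappa> w} = {\<kappa> \<in> Col (V, insert {w,x} D) m. \<kappa> c = \<kappa> w}"
    unfolding Col_def by (auto simp: proper_insert)
  show ?thesis unfolding csf_Col Col_insert[of V c w "insert {c,x} D"] Col_insert[of V c w "insert {w,x} D"]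
    using split[of "insert {c,x} D"] split[of "insert {w,x} D"] unfolding eq by linarith
qed

lemma csf_iso:
  assumes inj: "inj_on f V" and ed: "\<forall>e\<in>E. e \<subseteq> V"
  shows "csf (f ` V, (\<lambda>e. f ` e) ` E) = csf (V, E)"
proof
  fix m
  let ?A = "Col (f ` V, (\<lambda>e. f ` e) ` E) m" and ?B = "Col (V, E) m"
  let ?\<Phi> = "\<lambda>\<kappa>. restrict (\<kappa> \<circ> f) V" and ?\<Psi> = "\<lambda>\<kappa>. restrict (\<kappa> \<circ> inv_into V f) (f ` V)"
  have cardeq: "card {v \<in> f ` V. \<kappa> v = c} = card {v \<in> V. \<kappa> (f v) = c}" for \<kappa> c
  proof -
    have "{v \<in> f ` V. \<kappa> v = c} = f ` {v \<in> V. \<kappa> (f v) = c}" by auto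
    moreover have "inj_on f {v \<in> V. \<kappa> (f v) = c}" using inj by (rule inj_on_subset) auto
    ultimately show ?thesis by (simp add: card_image)
  qed
  have pr1: "proper_col (V, E) (restrict (\<kappa> \<circ> f) V)" if "proper_col (f ` V, (\<lambda>e. f ` e) ` E) \<kappa>" for \<kappa>
    unfolding proper_col_def
  proof (intro allI impI)
    fix x y assume xy: "{x, y} \<in> snd (V, E)"
    then have "x \<in> V" "y \<in> V" using ed by auto
    moreover have "f ` {x, y} \<in> (\<lambda>e. f ` e) ` E" using xy by (intro imageI) simp
    then have "{f x, f y} \<in> snd (f ` V, (\<lambda>e. f ` e) ` E)" by simp
    ultimately show "restrict (\<kappa> \<circ> f) V x \<noteq> restrict (\<kappa> \<circ> f) V y"
      using that unfolding proper_col_def by auto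
  qed
  have pr2: "proper_col (f ` V, (\<lambda>e. f ` e) ` E) (restrict (\<kappa> \<circ> inv_into V f) (f ` V))"
    if "proper_col (V, E) \<kappa>" for \<kappa>
    unfolding proper_col_def
  proof (intro allI impI)
    fix x y assume xy: "{x, y} \<in> snd (f ` V, (\<lambda>e. f ` e) ` E)"
    then obtain e where e: "e \<in> E" "{x, y} = f ` e" by auto
    have eV: "e \<subseteq> V" using e ed by auto
    have "x \<in> f ` e" "y \<in> f ` e" using e(2) by (metis insertI1, metis insertI1 insert_commute)
    then have xV: "x \<in> f ` V" "y \<in> f ` V" using eV by auto
    have "e = inv_into V f ` {x, y}"
      using e eV inj by (simp add: inv_into_image_cancel)
    then have "{inv_into V f x, inv_into V f y} \<in> E" using e(1) by (metis image_empty image_insert)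
    then have "\<kappa> (inv_into V f x) \<noteq> \<kappa> (inv_into V f y)" using that unfolding proper_col_def by auto
    then show "restrict (\<kappa> \<circ> inv_into V f) (f ` V) x \<noteq> restrict (\<kappa> \<circ> inv_into V f) (f ` V) y"
      using xV by auto
  qed
  have "bij_betw ?\<Phi> ?A ?B"
  proof (rule bij_betw_byWitness[where f' = ?\<Psi>])
    show "\<forall>a\<in>?A. ?\<Psi> (?\<Phi> a) = a"
    proof
      fix \<kappa> assume k: "\<kappa> \<in> ?A"
      show "?\<Psi> (?\<Phi> \<kappa>) = \<kappa>"
      proof (rule ext)
        fix z show "?\<Psi> (?\<Phi> \<kappa>) z = \<kappa> z"
        proof (cases "z \<in> f ` V")
          case True then show ?thesis by (simp add: inv_into_into f_inv_into_f)
        next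
          case False
          have "\<kappa> \<in> f ` V \<rightarrow>\<^sub>E {1..}" using k by (simp add: Col_def)
          then show ?thesis using PiE_arb[OF _ False, of \<kappa>] False by simp
        qed
      qed
    qed
    show "\<forall>a\<in>?B. ?\<Phi> (?\<Psi> a) = a"
    proof
      fix \<kappa> assume k: "\<kappa> \<in> ?B"
      show "?\<Phi> (?\<Psi> \<kappa>) = \<kappa>"
      proof (rule ext)
        fix z show "?\<Phi> (?\<Psi> \<kappa>) z = \<kappa> z"
        proof (cases "z \<in> V")
          case True then show ?thesis using inj by simp
        next
          case False
          have "\<kappa> \<in> V \<rightarrow>\<^sub>E {1..}" using k by (simp add: Col_def)
          then show ?thesis using PiE_arb[OF _ False, of \<kappa>] False by simp
        qed
      qed
    qed
    show "?\<Phi> ` ?A \<subseteq> ?B"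
    proof
      fix \<kappa>' assume "\<kappa>' \<in> ?\<Phi> ` ?A"
      then obtain \<kappa> where k: "\<kappa> \<in> ?A" "\<kappa>' = ?\<Phi> \<kappa>" by auto
      have "card {v \<in> V. \<kappa>' v = c} = card {v \<in> V. \<kappa> (f v) = c}" for c
        using k(2) by (intro arg_cong[where f=card]) auto
      moreover have "\<kappa>' \<in> V \<rightarrow>\<^sub>E {1..}" using k by (auto simp: Col_def PiE_iff)
      moreover have "proper_col (V, E) \<kappa>'" using k pr1 by (simp add: Col_def)
      ultimately show "\<kappa>' \<in> ?B" using k by (simp add: Col_def cardeq)
    qed
    show "?\<Psi> ` ?B \<subseteq> ?A"
    proof
      fix \<kappa>' assume "\<kappa>' \<in> ?\<Psi> ` ?B"
      then obtain \<kappa> where k: "\<kappa> \<in> ?B" "\<kappa>' = ?\<Psi> \<kappa>" by auto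
      have "card {v \<in> f ` V. \<kappa>' v = c} = card {v \<in> V. \<kappa> v = c}" for c
        unfolding cardeq using k(2) inj by (intro arg_cong[where f=card]) (auto simp: inj_on_eq_iff)
      moreover have "\<kappa>' \<in> f ` V \<rightarrow>\<^sub>E {1..}" using k by (auto simp: Col_def PiE_iff inv_into_into)
      moreover have "proper_col (f ` V, (\<lambda>e. f ` e) ` E) \<kappa>'" using k pr2 by (simp add: Col_def)
      ultimately show "\<kappa>' \<in> ?A" using k by (simp add: Col_def)
    qed
  qed
  then show "csf (f ` V, (\<lambda>e. f ` e) ` E) m = csf (V, E) m"
    unfolding csf_Col by (simp add: bij_betw_same_card)
qed

lemma finite_splits: "finite {(a, b). a + b = (m :: nat \<Rightarrow>\<^sub>0 nat)}"
proof -
  let ?L = "{a :: nat \<Rightarrow>\<^sub>0 nat. \<forall>c. Poly_Mapping.lookup a c \<le> Poly_Mapping.lookup m c}"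
  let ?r = "\<lambda>a :: nat \<Rightarrow>\<^sub>0 nat. restrict (Poly_Mapping.lookup a) (Poly_Mapping.keys m)"
  have inj: "inj_on ?r ?L"
  proof (rule inj_onI)
    fix a b assume a: "a \<in> ?L" and b: "b \<in> ?L" and eq: "?r a = ?r b"
    show "a = b"
    proof (rule poly_mapping_eqI)
      fix c show "Poly_Mapping.lookup a c = Poly_Mapping.lookup b c"
      proof (cases "c \<in> Poly_Mapping.keys m")
        case True then show ?thesis using fun_cong[OF eq, of c] by simp
      next
        case False
        then have "Poly_Mapping.lookup m c = 0" by (simp add: in_keys_iff)
        then show ?thesis using a b by (metis le_zero_eq mem_Collect_eq)
      qed
    qed
  qed
  have "?r ` ?L \<subseteq> PiE (Poly_Mapping.keys m) (\<lambda>c. {0..Poly_Mapping.lookup m c})"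
    by auto
  then have "finite (?r ` ?L)" by (rule finite_subset) (simp add: finite_PiE)
  then have finL: "finite ?L" using inj finite_imageD by blast
  have "{(a, b). a + b = m} \<subseteq> (\<lambda>a. (a, m - a)) ` ?L"
  proof
    fix p assume "p \<in> {(a, b). a + b = m}"
    then obtain a b where p: "p = (a, b)" "a + b = m" by auto
    have "Poly_Mapping.lookup m c = Poly_Mapping.lookup a c + Poly_Mapping.lookup b c" for c
      using p(2) lookup_add by metis
    then have "a \<in> ?L" by simp
    moreover have "b = m - a" using p(2) by (metis add_diff_cancel_left')
    ultimately show "p \<in> (\<lambda>a. (a, m - a)) ` ?L" using p(1) by (intro image_eqI[where x=a]) auto
  qed
  then show ?thesis using finL by (rule finite_subset[OF _ finite_imageI])
qed

definition mon :: "'v set \<Rightarrow> ('v \<Rightarrow> nat) \<Rightarrow> (nat \<Rightarrow>\<^sub>0 nat)" where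
  "mon V \<kappa> = Abs_poly_mapping (\<lambda>c. card {v \<in> V. \<kappa> v = c})"

lemma lookup_mon:
  assumes "finite V" shows "Poly_Mapping.lookup (mon V \<kappa>) = (\<lambda>c. card {v \<in> V. \<kappa> v = c})"
proof -
  have "{c. card {v \<in> V. \<kappa> v = c} \<noteq> 0} \<subseteq> \<kappa> ` V"
  proof
    fix c assume "c \<in> {c. card {v \<in> V. \<kappa> v = c} \<noteq> 0}"
    then have "{v \<in> V. \<kappa> v = c} \<noteq> {}" by (intro notI) simp
    then show "c \<in> \<kappa> ` V" by auto
  qed
  then have "finite {c. card {v \<in> V. \<kappa> v = c} \<noteq> 0}" by (rule finite_subset) (simp add: assms)
  then show ?thesis unfolding mon_def by (rule lookup_Abs_poly_mapping)
qed

lemma csf_split: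
  assumes fin1: "finite V1" and fin2: "finite V2" and disj: "V1 \<inter> V2 = {}"
    and e1: "\<forall>e\<in>E1. e \<subseteq> V1" and e2: "\<forall>e\<in>E2. e \<subseteq> V2"
  shows "csf (V1 \<union> V2, E1 \<union> E2) = sf_mult (csf (V1, E1)) (csf (V2, E2))"
proof (rule ext)
  fix m :: "nat \<Rightarrow>\<^sub>0 nat"
  let ?P = "{(a, b). a + b = m}"
  let ?C = "Col (V1 \<union> V2, E1 \<union> E2) m"
  let ?S = "SIGMA p:?P. Col (V1, E1) (fst p) \<times> Col (V2, E2) (snd p)"
  let ?\<Phi> = "\<lambda>\<kappa>. ((mon V1 \<kappa>, mon V2 \<kappa>), (restrict \<kappa> V1, restrict \<kappa> V2))"
  let ?\<Psi> = "\<lambda>x. (\<lambda>v. if v \<in> V1 then fst (snd x) v else snd (snd x) v)"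
  have finP: "finite ?P" by (rule finite_splits)
  have fin: "finite (Col (V, E) a)" if "finite V" for V E a using Col_finite[of "(V, E)"] that by simp
  have proper_iff: "proper_col (V1 \<union> V2, E1 \<union> E2) \<kappa> \<longleftrightarrow>
      proper_col (V1, E1) (restrict \<kappa> V1) \<and> proper_col (V2, E2) (restrict \<kappa> V2)" for \<kappa>
    unfolding proper_col_def using e1 e2 by auto
  have cardU: "card {v \<in> V1 \<union> V2. \<kappa> v = c} = card {v \<in> V1. \<kappa> v = c} + card {v \<in> V2. \<kappa> v = c}" for \<kappa> c
  proof -
    have "{v \<in> V1 \<union> V2. \<kappa> v = c} = {v \<in> V1. \<kappa> v = c} \<union> {v \<in> V2. \<kappa> v = c}" by auto
    then show ?thesis using fin1 fin2 disj by (simp add: card_Un_disjoint disjoint_iff)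
  qed
  have rc: "{v \<in> V. restrict \<kappa> V v = c} = {v \<in> V. \<kappa> v = c}" for V \<kappa> c by auto
  have rc': "{v. (v \<in> V \<longrightarrow> \<kappa> v = c) \<and> v \<in> V} = {v \<in> V. \<kappa> v = c}" for V \<kappa> c by auto
  have "bij_betw ?\<Phi> ?C ?S"
  proof (rule bij_betw_byWitness[where f' = ?\<Psi>])
    show "\<forall>a\<in>?C. ?\<Psi> (?\<Phi> a) = a"
    proof
      fix \<kappa> assume k: "\<kappa> \<in> ?C"
      have kP: "\<kappa> \<in> V1 \<union> V2 \<rightarrow>\<^sub>E {1..}" using k by (simp add: Col_def)
      show "?\<Psi> (?\<Phi> \<kappa>) = \<kappa>"
        by (intro ext) (use PiE_arb[OF kP] in auto)
    qed
    show "\<forall>a\<in>?S. ?\<Phi> (?\<Psi> a) = a"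
    proof
      fix x assume x: "x \<in> ?S"
      then obtain a b \<kappa>1 \<kappa>2 where xd: "x = ((a, b), (\<kappa>1, \<kappa>2))" "a + b = m"
        "\<kappa>1 \<in> Col (V1, E1) a" "\<kappa>2 \<in> Col (V2, E2) b" by auto
      have k1: "\<kappa>1 \<in> V1 \<rightarrow>\<^sub>E {1..}" "\<forall>c. card {v \<in> V1. \<kappa>1 v = c} = Poly_Mapping.lookup a c"
        using xd by (auto simp: Col_def)
      have k2: "\<kappa>2 \<in> V2 \<rightarrow>\<^sub>E {1..}" "\<forall>c. card {v \<in> V2. \<kappa>2 v = c} = Poly_Mapping.lookup b c"
        using xd by (auto simp: Col_def)
      let ?k = "?\<Psi> x"
      have r1: "restrict ?k V1 = \<kappa>1"
        using PiE_arb[OF k1(1)] xd(1) by (intro ext) auto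
      have r2: "restrict ?k V2 = \<kappa>2"
        using PiE_arb[OF k2(1)] xd(1) disj by (intro ext) auto
      have "{v \<in> V1. ?k v = c} = {v \<in> V1. \<kappa>1 v = c}" for c using xd(1) by auto
      then have m1: "mon V1 ?k = a" using k1(2)
        by (intro poly_mapping_eqI) (simp add: lookup_mon[OF fin1])
      have "{v \<in> V2. ?k v = c} = {v \<in> V2. \<kappa>2 v = c}" for c using xd(1) disj by auto
      then have m2: "mon V2 ?k = b" using k2(2)
        by (intro poly_mapping_eqI) (simp add: lookup_mon[OF fin2])
      show "?\<Phi> (?\<Psi> x) = x" using r1 r2 m1 m2 xd(1) by simp
    qed
    show "?\<Phi> ` ?C \<subseteq> ?S"
    proof
      fix y assume "y \<in> ?\<Phi> ` ?C"
      then obtain \<kappa> where k: "\<kappa> \<in> ?C" "y = ?\<Phi> \<kappa>" by auto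
      have kk: "\<kappa> \<in> V1 \<union> V2 \<rightarrow>\<^sub>E {1..}" "proper_col (V1 \<union> V2, E1 \<union> E2) \<kappa>"
        "\<forall>c. card {v \<in> V1 \<union> V2. \<kappa> v = c} = Poly_Mapping.lookup m c"
        using k by (auto simp: Col_def)
      have "Poly_Mapping.lookup (mon V1 \<kappa> + mon V2 \<kappa>) c = Poly_Mapping.lookup m c" for c
      proof -
        have "Poly_Mapping.lookup (mon V1 \<kappa> + mon V2 \<kappa>) c = card {v \<in> V1. \<kappa> v = c} + card {v \<in> V2. \<kappa> v = c}"
          by (simp add: lookup_add lookup_mon fin1 fin2)
        also have "\<dots> = card {v \<in> V1 \<union> V2. \<kappa> v = c}" by (rule cardU[symmetric])
        also have "\<dots> = Poly_Mapping.lookup m c" using kk(3) by blast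
        finally show ?thesis .
      qed
      then have "mon V1 \<kappa> + mon V2 \<kappa> = m" by (rule poly_mapping_eqI)
      moreover have "restrict \<kappa> V1 \<in> Col (V1, E1) (mon V1 \<kappa>)"
        using kk(1,2) unfolding Col_def proper_iff by (auto simp: lookup_mon[OF fin1] PiE_iff rc rc')
      moreover have "restrict \<kappa> V2 \<in> Col (V2, E2) (mon V2 \<kappa>)"
        using kk(1,2) unfolding Col_def proper_iff by (auto simp: lookup_mon[OF fin2] PiE_iff rc rc')
      ultimately show "y \<in> ?S" using k(2) by auto
    qed
    show "?\<Psi> ` ?S \<subseteq> ?C"
    proof
      fix y assume "y \<in> ?\<Psi> ` ?S"
      then obtain x where x: "x \<in> ?S" "y = ?\<Psi> x" by auto
      then obtain a b \<kappa>1 \<kappa>2 where xd: "x = ((a, b), (\<kappa>1, \<kappa>2))" "a + b = m"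
        "\<kappa>1 \<in> Col (V1, E1) a" "\<kappa>2 \<in> Col (V2, E2) b" by auto
      have k1: "\<kappa>1 \<in> V1 \<rightarrow>\<^sub>E {1..}" "proper_col (V1, E1) \<kappa>1" "\<forall>c. card {v \<in> V1. \<kappa>1 v = c} = Poly_Mapping.lookup a c"
        using xd by (auto simp: Col_def)
      have k2: "\<kappa>2 \<in> V2 \<rightarrow>\<^sub>E {1..}" "proper_col (V2, E2) \<kappa>2" "\<forall>c. card {v \<in> V2. \<kappa>2 v = c} = Poly_Mapping.lookup b c"
        using xd by (auto simp: Col_def)
      have r1: "restrict y V1 = \<kappa>1"
        using PiE_arb[OF k1(1)] xd(1) x(2) by (intro ext) auto
      have r2: "restrict y V2 = \<kappa>2"
        using PiE_arb[OF k2(1)] xd(1) x(2) disj by (intro ext) auto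
      have yP: "y \<in> V1 \<union> V2 \<rightarrow>\<^sub>E {1..}"
        using k1(1) k2(1) x(2) xd(1) by (auto simp: PiE_iff extensional_def)
      have "proper_col (V1 \<union> V2, E1 \<union> E2) y" unfolding proper_iff r1 r2 using k1 k2 by simp
      moreover have "card {v \<in> V1 \<union> V2. y v = c} = Poly_Mapping.lookup m c" for c
      proof -
        have "{v \<in> V1. y v = c} = {v \<in> V1. \<kappa>1 v = c}" using x(2) xd(1) by auto
        moreover have "{v \<in> V2. y v = c} = {v \<in> V2. \<kappa>2 v = c}" using x(2) xd(1) disj by auto
        ultimately show ?thesis unfolding cardU using k1(3) k2(3) xd(2)[symmetric] by (simp add: lookup_add)
      qed
      ultimately show "y \<in> ?C" using yP by (simp add: Col_def)
    qed
  qed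
  then have "card ?C = card ?S" by (rule bij_betw_same_card)
  also have "\<dots> = (\<Sum>p\<in>?P. card (Col (V1, E1) (fst p) \<times> Col (V2, E2) (snd p)))"
    by (rule card_SigmaI[OF finP]) (auto intro: fin fin1 fin2)
  also have "\<dots> = (\<Sum>p\<in>?P. card (Col (V1, E1) (fst p)) * card (Col (V2, E2) (snd p)))"
    by (simp add: card_cartesian_product)
  finally show "csf (V1 \<union> V2, E1 \<union> E2) m = sf_mult (csf (V1, E1)) (csf (V2, E2)) m"
    unfolding sf_mult_def csf_Col by simp
qed

definition pres :: "'a rgraph \<Rightarrow> 'b rgraph \<Rightarrow> nat \<Rightarrow> nat set set \<Rightarrow> 'w graph
    \<Rightarrow> ('a \<Rightarrow> 'w) \<Rightarrow> ('b \<Rightarrow> 'w) \<Rightarrow> (nat \<Rightarrow> 'w) \<Rightarrow> bool" where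
  "pres G H N T X eG eH \<phi> \<longleftrightarrow>
    inj_on eG (fst (fst G)) \<and> inj_on eH (fst (fst H)) \<and> inj_on \<phi> {0..N} \<and>
    \<phi> 0 = eG (snd G) \<and> \<phi> N = eH (snd H) \<and>
    (\<forall>x\<in>fst (fst G). \<forall>n\<in>{0..N}. eG x = \<phi> n \<longrightarrow> n = 0) \<and>
    (\<forall>y\<in>fst (fst H). \<forall>n\<in>{0..N}. eH y = \<phi> n \<longrightarrow> n = N) \<and>
    (\<forall>x\<in>fst (fst G). \<forall>y\<in>fst (fst H). eG x = eH y \<longrightarrow> x = snd G \<and> y = snd H \<and> N = 0) \<and>
    X = (eG ` fst (fst G) \<union> eH ` fst (fst H) \<union> \<phi> ` {0..N},
         (\<lambda>e. eG ` e) ` snd (fst G) \<union> (\<lambda>e. eH ` e) ` snd (fst H) \<union> (\<lambda>e. \<phi> ` e) ` T)"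

lemma pres_map:
  assumes p1: "pres ((VG, EG), u) ((VH, EH), v) N T X1 eG1 eH1 \<phi>1"
    and p2: "pres ((VG, EG), u) ((VH, EH), v) N T X2 eG2 eH2 \<phi>2"
    and uG: "u \<in> VG" and vH: "v \<in> VH"
  shows "\<exists>f. (\<forall>x\<in>VG. f (eG1 x) = eG2 x) \<and> (\<forall>y\<in>VH. f (eH1 y) = eH2 y) \<and> (\<forall>n\<in>{0..N}. f (\<phi>1 n) = \<phi>2 n)"
proof -
  define f where "f = (\<lambda>z. if z \<in> eG1 ` VG then eG2 (inv_into VG eG1 z)
     else if z \<in> eH1 ` VH then eH2 (inv_into VH eH1 z) else \<phi>2 (inv_into {0..N} \<phi>1 z))"
  note P1 = p1[unfolded pres_def, simplified]
  note P2 = p2[unfolded pres_def, simplified]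
  have f1: "\<forall>x\<in>VG. f (eG1 x) = eG2 x" using P1 by (simp add: f_def)
  have f2: "f (eH1 y) = eH2 y" if y: "y \<in> VH" for y
  proof (cases "eH1 y \<in> eG1 ` VG")
    case True
    then obtain x where x: "x \<in> VG" "eH1 y = eG1 x" by auto
    then have "x = u \<and> y = v \<and> N = 0" using P1 y by metis
    have "f (eH1 y) = f (eG1 x)" using x by simp
    also have "\<dots> = eG2 x" using f1 x by blast
    also have "\<dots> = eH2 y" using \<open>x = u \<and> y = v \<and> N = 0\<close> P2 by metis
    finally show ?thesis .
  next
    case False then show ?thesis using P1 y by (simp add: f_def)
  qed
  have f3: "f (\<phi>1 n) = \<phi>2 n" if n: "n \<in> {0..N}" for n
  proof (cases "\<phi>1 n \<in> eG1 ` VG")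
    case True
    then obtain x where x: "x \<in> VG" "\<phi>1 n = eG1 x" by auto
    then have n0: "n = 0" using P1 n by metis
    then have "x = u" using x P1 uG by (metis inj_onD)
    then show ?thesis using x n0 P1 P2 by (simp add: f_def)
  next
    case F: False
    show ?thesis
    proof (cases "\<phi>1 n \<in> eH1 ` VH")
      case True
      then obtain y where y: "y \<in> VH" "\<phi>1 n = eH1 y" by auto
      then have nN: "n = N" using P1 n by metis
      then have "y = v" using y P1 vH by (metis inj_onD)
      then show ?thesis using y nN P1 P2 F by (simp add: f_def)
    next
      case False then show ?thesis using F n P1 by (simp add: f_def)
    qed
  qed
  show ?thesis using f1 f2 f3 by blast
qed

lemma pres_csf:
  assumes wG: "wf_rgraph G" and wH: "wf_rgraph H" and T: "\<forall>e\<in>T. e \<subseteq> {0..N}"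
    and p1: "pres G H N T X1 eG1 eH1 \<phi>1"
    and p2: "pres G H N T X2 eG2 eH2 \<phi>2"
  shows "csf X1 = csf X2"
proof -
  obtain VG EG u where G: "G = ((VG, EG), u)" by (metis prod.collapse)
  obtain VH EH v where H: "H = ((VH, EH), v)" by (metis prod.collapse)
  have uG: "u \<in> VG" and vH: "v \<in> VH" and eG: "\<forall>e\<in>EG. e \<subseteq> VG" and eH: "\<forall>e\<in>EH. e \<subseteq> VH"
    using wG wH by (auto simp: G H wf_rgraph_def wf_graph_def)
  obtain f where f: "\<forall>x\<in>VG. f (eG1 x) = eG2 x" "\<forall>y\<in>VH. f (eH1 y) = eH2 y" "\<forall>n\<in>{0..N}. f (\<phi>1 n) = \<phi>2 n"
    using pres_map[OF p1[unfolded G H] p2[unfolded G H] uG vH] by blast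
  obtain f' where f': "\<forall>x\<in>VG. f' (eG2 x) = eG1 x" "\<forall>y\<in>VH. f' (eH2 y) = eH1 y" "\<forall>n\<in>{0..N}. f' (\<phi>2 n) = \<phi>1 n"
    using pres_map[OF p2[unfolded G H] p1[unfolded G H] uG vH] by blast
  note P1 = p1[unfolded pres_def G H, simplified]
  note P2 = p2[unfolded pres_def G H, simplified]
  let ?V1 = "eG1 ` VG \<union> eH1 ` VH \<union> \<phi>1 ` {0..N}"
  let ?E1 = "(\<lambda>e. eG1 ` e) ` EG \<union> (\<lambda>e. eH1 ` e) ` EH \<union> (\<lambda>e. \<phi>1 ` e) ` T"
  have X1: "X1 = (?V1, ?E1)" using P1 by simp
  have inj: "inj_on f ?V1"
  proof (rule inj_on_inverseI[where g = f'])
    fix z assume "z \<in> ?V1" then show "f' (f z) = z" using f f' by auto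
  qed
  have ed: "\<forall>e\<in>?E1. e \<subseteq> ?V1" using eG eH T by blast
  have a1: "f ` (eG1 ` VG) = eG2 ` VG" unfolding image_image using f(1) by (intro image_cong) auto
  have a2: "f ` (eH1 ` VH) = eH2 ` VH" unfolding image_image using f(2) by (intro image_cong) auto
  have a3: "f ` (\<phi>1 ` {0..N}) = \<phi>2 ` {0..N}" unfolding image_image using f(3) by (intro image_cong) auto
  have img1: "f ` ?V1 = eG2 ` VG \<union> eH2 ` VH \<union> \<phi>2 ` {0..N}"
    by (simp only: image_Un a1 a2 a3)
  have iG: "(\<lambda>e. f ` e) ` ((\<lambda>e. eG1 ` e) ` EG) = (\<lambda>e. eG2 ` e) ` EG"
  proof -
    have "f ` (eG1 ` e) = eG2 ` e" if "e \<in> EG" for e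
      using that eG f(1) by (auto simp: image_image intro!: image_cong)
    then show ?thesis by (simp add: image_image cong: image_cong)
  qed
  have iH: "(\<lambda>e. f ` e) ` ((\<lambda>e. eH1 ` e) ` EH) = (\<lambda>e. eH2 ` e) ` EH"
  proof -
    have "f ` (eH1 ` e) = eH2 ` e" if "e \<in> EH" for e
      using that eH f(2) by (auto simp: image_image intro!: image_cong)
    then show ?thesis by (simp add: image_image cong: image_cong)
  qed
  have iT: "(\<lambda>e. f ` e) ` ((\<lambda>e. \<phi>1 ` e) ` T) = (\<lambda>e. \<phi>2 ` e) ` T"
  proof -
    have "f ` (\<phi>1 ` e) = \<phi>2 ` e" if "e \<in> T" for e
      using that T f(3) by (auto simp: image_image intro!: image_cong)
    then show ?thesis by (simp add: image_image cong: image_cong)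
  qed
  have "X2 = (f ` ?V1, (\<lambda>e. f ` e) ` ?E1)"
    using P2 img1 iG iH iT by (simp add: image_Un)
  then have "csf X2 = csf (?V1, ?E1)" using csf_iso[OF inj ed] by simp
  then show ?thesis using X1 by simp
qed

definition pathE :: "nat \<Rightarrow> nat set set" where
  "pathE k = {{s, Suc s} | s. s < k}"

definition spT :: "nat \<Rightarrow> nat \<Rightarrow> nat \<Rightarrow> nat set set" where
  "spT g h j = {{g - s, g - Suc s} | s. s < g}
      \<union> {{if s = 0 then g else g + j + s, g + j + Suc s} | s. s < h}
      \<union> {{if s = 0 then g else g + s, g + Suc s} | s. s < j}"

definition Dset :: "nat \<Rightarrow> nat \<Rightarrow> nat \<Rightarrow> nat set set" where
  "Dset g h j = (\<lambda>n. {n, Suc n}) ` ({..<g} \<union> {g<..<g + j} \<union> {g + j<..<g + j + h})"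

lemma spT_0: "spT g h 0 = pathE (g + h)"
proof (rule set_eqI)
  fix e show "e \<in> spT g h 0 \<longleftrightarrow> e \<in> pathE (g + h)"
  proof
    assume "e \<in> spT g h 0"
    then consider (a) s where "s < g" "e = {g - s, g - Suc s}"
      | (b) s where "s < h" "e = {if s = 0 then g else g + s, g + Suc s}"
      unfolding spT_def by auto
    then show "e \<in> pathE (g + h)"
    proof cases
      case a then show ?thesis unfolding pathE_def
        by (intro CollectI exI[where x="g - Suc s"]) (auto simp: Suc_diff_Suc)
    next
      case b then show ?thesis unfolding pathE_def
        by (intro CollectI exI[where x="g + s"]) auto
    qed
  next
    assume "e \<in> pathE (g + h)"
    then obtain n where n: "n < g + h" "e = {n, Suc n}" unfolding pathE_def by auto
    show "e \<in> spT g h 0"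
    proof (cases "n < g")
      case True
      then have "e = {g - (g - Suc n), g - Suc (g - Suc n)} \<and> g - Suc n < g" using n by auto
      then show ?thesis unfolding spT_def by blast
    next
      case False
      then have "e = {if n - g = 0 then g else g + 0 + (n - g), g + 0 + Suc (n - g)} \<and> n - g < h" using n by auto
      then show ?thesis unfolding spT_def by blast
    qed
  qed
qed

definition linT :: "nat \<Rightarrow> nat \<Rightarrow> nat \<Rightarrow> nat set set" where
  "linT g h j = (\<lambda>n. {n, Suc n}) ` ({..<g} \<union> {g..<g + j} \<union> {g + j<..<g + j + h}) \<union> {{g, g + j + 1}}"

lemma linT_memI: "x \<in> {..<g} \<union> {g..<g + j} \<union> {g + j<..<g + j + h} \<Longrightarrow> e = {x, Suc x} \<Longrightarrow> e \<in> linT g h j"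
  unfolding linT_def by blast

lemma spT_lin:
  assumes h: "h \<ge> 1" shows "spT g h j = linT g h j"
proof (rule set_eqI)
  fix e show "e \<in> spT g h j \<longleftrightarrow> e \<in> linT g h j"
  proof
    assume "e \<in> spT g h j"
    then consider (a) s where "s < g" "e = {g - s, g - Suc s}"
      | (b) s where "s < h" "e = {if s = 0 then g else g + j + s, g + j + Suc s}"
      | (c) s where "s < j" "e = {if s = 0 then g else g + s, g + Suc s}"
      unfolding spT_def by auto
    then show "e \<in> linT g h j"
    proof cases
      case a
      then have "e = {g - Suc s, Suc (g - Suc s)} \<and> g - Suc s < g" by (auto simp: Suc_diff_Suc)
      then show ?thesis using linT_memI[of "g - Suc s" g j h e] by auto
    next
      case b
      show ?thesis
      proof (cases "s = 0")
        case True then show ?thesis using b unfolding linT_def by simp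
      next
        case False
        then have "e = {g + j + s, Suc (g + j + s)} \<and> g + j < g + j + s \<and> g + j + s < g + j + h" using b by auto
        then show ?thesis using linT_memI[of "g + j + s" g j h e] by auto
      qed
    next
      case c
      then have "e = {g + s, Suc (g + s)} \<and> g \<le> g + s \<and> g + s < g + j" by auto
      then show ?thesis using linT_memI[of "g + s" g j h e] by auto
    qed
  next
    assume "e \<in> linT g h j"
    then have "e \<in> (\<lambda>n. {n, Suc n}) ` ({..<g} \<union> {g..<g + j} \<union> {g + j<..<g + j + h}) \<or> e = {g, g + j + 1}"
      unfolding linT_def by blast
    then show "e \<in> spT g h j"
    proof
      assume "e \<in> (\<lambda>n. {n, Suc n}) ` ({..<g} \<union> {g..<g + j} \<union> {g + j<..<g + j + h})"
      then obtain n where n: "n \<in> {..<g} \<union> {g..<g + j} \<union> {g + j<..<g + j + h}" "e = {n, Suc n}" by blast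
      consider (a) "n < g" | (b) "g \<le> n" "n < g + j" | (d) "g + j < n" "n < g + j + h"
        using n(1) by fastforce
      then show ?thesis
      proof cases
        case a
        then have "e = {g - (g - Suc n), g - Suc (g - Suc n)} \<and> g - Suc n < g" using n(2) by auto
        then show ?thesis unfolding spT_def by blast
      next
        case b
        then have "e = {if n - g = 0 then g else g + (n - g), g + Suc (n - g)} \<and> n - g < j" using n(2) by auto
        then show ?thesis unfolding spT_def by blast
      next
        case d
        then have "e = {if n - g - j = 0 then g else g + j + (n - g - j), g + j + Suc (n - g - j)} \<and> n - g - j < h" using n(2) by auto
        then show ?thesis unfolding spT_def by blast
      qed
    next
      assume c: "e = {g, g + j + 1}"
      then have "e = {if (0::nat) = 0 then g else g + j + 0, g + j + Suc 0} \<and> (0::nat) < h" using h by auto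
      then show ?thesis unfolding spT_def by blast
    qed
  qed
qed

lemma N1: assumes "j \<ge> 1" shows "linT g h j = insert {g, Suc g} (insert {g, g + j + 1} (Dset g h j))"
proof -
  have "{..<g} \<union> {g..<g + j} \<union> {g + j<..<g + j + h} = insert g ({..<g} \<union> {g<..<g + j} \<union> {g + j<..<g + j + h})"
    using assms by auto
  then show ?thesis unfolding linT_def Dset_def by (simp add: insert_commute)
qed

lemma N2: assumes "j \<ge> 1" shows "linT (Suc g) h (j - 1) = insert {g, Suc g} (insert {Suc g, g + j + 1} (Dset g h j))"
proof -
  have "{..<Suc g} \<union> {Suc g..<Suc g + (j - 1)} \<union> {Suc g + (j - 1)<..<Suc g + (j - 1) + h} = insert g ({..<g} \<union> {g<..<g + j} \<union> {g + j<..<g + j + h})"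
    using assms by auto
  moreover have "Suc g + (j - 1) + 1 = g + j + 1" using assms by simp
  ultimately show ?thesis unfolding linT_def Dset_def by (simp add: insert_commute)
qed

lemma DsetI: "x \<in> {..<g} \<union> {g<..<g + j} \<union> {g + j<..<g + j + h} \<Longrightarrow> e = {x, Suc x} \<Longrightarrow> e \<in> Dset g h j"
  unfolding Dset_def by blast

lemma DsetE:
  assumes "e \<in> Dset g h j"
  obtains n where "n < g" "e = {n, Suc n}" | n where "g < n" "n < g + j" "e = {n, Suc n}"
    | n where "g + j < n" "n < g + j + h" "e = {n, Suc n}"
proof -
  obtain n where n: "n \<in> {..<g} \<union> {g<..<g + j} \<union> {g + j<..<g + j + h}" "e = {n, Suc n}"
    using assms unfolding Dset_def by blast
  then consider "n < g" | "g < n" "n < g + j" | "g + j < n" "n < g + j + h" by fastforce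
  then show ?thesis using n(2) that by metis
qed

lemma pathE_iff: "e \<in> pathE k \<longleftrightarrow> (\<exists>s<k. e = {s, Suc s})"
  unfolding pathE_def by blast

lemma path_graph_E_iff: "e \<in> snd (path_graph k) \<longleftrightarrow> (\<exists>s. Suc s < k \<and> e = {s, Suc s})"
  unfolding path_graph_def by auto

lemma pathE_I: "s < k \<Longrightarrow> {s, Suc s} \<in> pathE k"
  unfolding pathE_def by blast

lemma path_graph_I: "Suc s < k \<Longrightarrow> {s, Suc s} \<in> snd (path_graph k)"
  unfolding path_graph_def snd_conv by blast

definition sig :: "nat \<Rightarrow> nat \<Rightarrow> nat \<Rightarrow> nat" where
  "sig g j s = (if s \<le> g then s else s + j)"

definition rho :: "nat \<Rightarrow> nat \<Rightarrow> nat \<Rightarrow> nat \<Rightarrow> nat" where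
  "rho g h j s = (if s < h then g + h + j - s else Suc g + (s - h))"

lemma N3:
  assumes h: "h \<ge> 1"
  shows "insert {g, g + j + 1} (Dset g h j)
       = (\<lambda>e. sig g j ` e) ` pathE (g + h) \<union> (\<lambda>e. (\<lambda>i. Suc g + i) ` e) ` snd (path_graph j)"
proof (rule set_eqI)
  fix e
  show "e \<in> insert {g, g + j + 1} (Dset g h j) \<longleftrightarrow>
        e \<in> (\<lambda>e. sig g j ` e) ` pathE (g + h) \<union> (\<lambda>e. (\<lambda>i. Suc g + i) ` e) ` snd (path_graph j)"
  proof
    assume "e \<in> insert {g, g + j + 1} (Dset g h j)"
    then consider "e = {g, g + j + 1}" | "e \<in> Dset g h j" by blast
    then show "e \<in> (\<lambda>e. sig g j ` e) ` pathE (g + h) \<union> (\<lambda>e. (\<lambda>i. Suc g + i) ` e) ` snd (path_graph j)"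
    proof cases
      case 1
      then have "e = sig g j ` {g, Suc g}" by (auto simp: sig_def)
      moreover have "{g, Suc g} \<in> pathE (g + h)" using h by (intro pathE_I) auto
      ultimately show ?thesis by blast
    next
      case 2
      then show ?thesis
      proof (cases rule: DsetE)
        case (1 n)
        then have "e = sig g j ` {n, Suc n}" by (auto simp: sig_def)
        moreover have "{n, Suc n} \<in> pathE (g + h)" using 1 by (intro pathE_I) auto
        ultimately show ?thesis by blast
      next
        case (2 n)
        then have "e = (\<lambda>i. Suc g + i) ` {n - Suc g, Suc (n - Suc g)}" by auto
        moreover have "{n - Suc g, Suc (n - Suc g)} \<in> snd (path_graph j)" using 2 by (intro path_graph_I) auto
        ultimately show ?thesis by blast
      next
        case (3 n)
        then have "e = sig g j ` {n - j, Suc (n - j)}" by (auto simp: sig_def)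
        moreover have "{n - j, Suc (n - j)} \<in> pathE (g + h)" using 3 by (intro pathE_I) auto
        ultimately show ?thesis by blast
      qed
    qed
  next
    assume "e \<in> (\<lambda>e. sig g j ` e) ` pathE (g + h) \<union> (\<lambda>e. (\<lambda>i. Suc g + i) ` e) ` snd (path_graph j)"
    then consider s where "s < g + h" "e = sig g j ` {s, Suc s}" | i where "Suc i < j" "e = (\<lambda>i. Suc g + i) ` {i, Suc i}"
      unfolding pathE_def path_graph_def snd_conv by blast
    then show "e \<in> insert {g, g + j + 1} (Dset g h j)"
    proof cases
      case (1 s)
      consider "s < g" | "s = g" | "g < s" by linarith
      then show ?thesis
      proof cases
        case a: 1
        then have "e = {s, Suc s}" using 1 by (auto simp: sig_def)
        then show ?thesis using DsetI[of s g j h e] a by auto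
      next
        case 2
        then show ?thesis using 1 by (auto simp: sig_def)
      next
        case a: 3
        then have "e = {s + j, Suc (s + j)}" using 1 by (auto simp: sig_def)
        then show ?thesis using DsetI[of "s + j" g j h e] a 1 by auto
      qed
    next
      case (2 i)
      then have "e = {Suc g + i, Suc (Suc g + i)}" by auto
      then show ?thesis using DsetI[of "Suc g + i" g j h e] 2 by auto
    qed
  qed
qed

lemma N4:
  assumes h: "h \<ge> 1" and j: "j \<ge> 1"
  shows "insert {Suc g, g + j + 1} (Dset g h j)
       = pathE g \<union> (\<lambda>e. rho g h j ` e) ` pathE (h + j - 1)"
proof (rule set_eqI)
  fix e
  show "e \<in> insert {Suc g, g + j + 1} (Dset g h j) \<longleftrightarrow>
        e \<in> pathE g \<union> (\<lambda>e. rho g h j ` e) ` pathE (h + j - 1)"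
  proof
    assume "e \<in> insert {Suc g, g + j + 1} (Dset g h j)"
    then consider "e = {Suc g, g + j + 1}" | "e \<in> Dset g h j" by blast
    then show "e \<in> pathE g \<union> (\<lambda>e. rho g h j ` e) ` pathE (h + j - 1)"
    proof cases
      case 1
      then have "e = rho g h j ` {h - 1, Suc (h - 1)}" using h by (auto simp: rho_def)
      moreover have "{h - 1, Suc (h - 1)} \<in> pathE (h + j - 1)" using h j by (intro pathE_I) auto
      ultimately show ?thesis by blast
    next
      case 2
      then show ?thesis
      proof (cases rule: DsetE)
        case (1 n)
        then show ?thesis by (auto simp: pathE_iff)
      next
        case (2 n)
        then have "e = rho g h j ` {h + (n - Suc g), Suc (h + (n - Suc g))}" by (auto simp: rho_def)
        moreover have "{h + (n - Suc g), Suc (h + (n - Suc g))} \<in> pathE (h + j - 1)" using 2 by (intro pathE_I) auto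
        ultimately show ?thesis by blast
      next
        case (3 n)
        then have "e = rho g h j ` {g + h + j - Suc n, Suc (g + h + j - Suc n)}" by (auto simp: rho_def)
        moreover have "{g + h + j - Suc n, Suc (g + h + j - Suc n)} \<in> pathE (h + j - 1)" using 3 by (intro pathE_I) auto
        ultimately show ?thesis by blast
      qed
    qed
  next
    assume "e \<in> pathE g \<union> (\<lambda>e. rho g h j ` e) ` pathE (h + j - 1)"
    then consider s where "s < g" "e = {s, Suc s}" | s where "s < h + j - 1" "e = rho g h j ` {s, Suc s}"
      unfolding pathE_def by blast
    then show "e \<in> insert {Suc g, g + j + 1} (Dset g h j)"
    proof cases
      case (1 s)
      have "s \<in> {..<g} \<union> {g<..<g + j} \<union> {g + j<..<g + j + h}" using 1 by simp
      then have "e \<in> Dset g h j" using DsetI 1(2) by blast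
      then show ?thesis by blast
    next
      case (2 s)
      consider "Suc s < h" | "Suc s = h" | "h \<le> s" by linarith
      then show ?thesis
      proof cases
        case a: 1
        then have "e = {g + h + j - Suc s, Suc (g + h + j - Suc s)}" using 2 by (auto simp: rho_def)
        moreover have "g + h + j - Suc s \<in> {..<g} \<union> {g<..<g + j} \<union> {g + j<..<g + j + h}" using a by auto
        ultimately have "e \<in> Dset g h j" using DsetI by blast
        then show ?thesis by blast
      next
        case a: 2
        then have "e = {Suc g, g + j + 1}" using 2 by (auto simp: rho_def)
        then show ?thesis by simp
      next
        case a: 3
        then have "e = {Suc g + (s - h), Suc (Suc g + (s - h))}" using 2 by (auto simp: rho_def)
        moreover have "Suc g + (s - h) \<in> {..<g} \<union> {g<..<g + j} \<union> {g + j<..<g + j + h}" using a 2 by auto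
        ultimately have "e \<in> Dset g h j" using DsetI by blast
        then show ?thesis by blast
      qed
    qed
  qed
qed

definition CG :: "nat \<Rightarrow> nat set set \<Rightarrow> 'a rgraph \<Rightarrow> 'b rgraph \<Rightarrow> (('a + 'b) + nat) graph" where
  "CG k T G H =
    (let u = snd G; v = snd H;
         embG = (\<lambda>x. Inl (Inl x));
         embH = (\<lambda>y. if k = 0 \<and> y = v then Inl (Inl u) else Inl (Inr y));
         a = embG u; b = embH v; mid = (\<lambda>s. Inr s)
     in (embG ` fst (fst G) \<union> embH ` fst (fst H) \<union> leg_V a b mid k,
         (\<lambda>e. embG ` e) ` snd (fst G) \<union> (\<lambda>e. embH ` e) ` snd (fst H) \<union> (\<lambda>e. pathpt a b mid k ` e) ` T))"

lemma compr_img: "{F s | s. s < k} = F ` {..<k}"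
  by auto

lemma leg_E_pathE: "leg_E a b mid k = (\<lambda>e. pathpt a b mid k ` e) ` pathE k"
  unfolding leg_E_def pathE_def compr_img image_image by simp

lemma Pk_CG: "Pk k G H = CG k (pathE k) G H"
  unfolding Pk_def CG_def Let_def leg_E_pathE ..

lemma CG_pres:
  "pres ((VG, EG), u) ((VH, EH), v) k T (CG k T ((VG, EG), u) ((VH, EH), v))
     (\<lambda>x. Inl (Inl x)) (\<lambda>y. if k = 0 \<and> y = v then Inl (Inl u) else Inl (Inr y))
     (pathpt (Inl (Inl u)) (if k = 0 then Inl (Inl u) else Inl (Inr v)) Inr k)"
  unfolding pres_def CG_def Let_def leg_V_def
  by (auto simp: inj_on_def pathpt_def split: if_splits)

lemma csf_CG:
  assumes wG: "wf_rgraph G" and wH: "wf_rgraph H" and T: "\<forall>e\<in>T. e \<subseteq> {0..N}"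
    and p: "pres G H N T X eG eH \<phi>"
  shows "csf X = csf (CG N T G H)"
proof -
  obtain VG EG u where G: "G = ((VG, EG), u)" by (metis prod.collapse)
  obtain VH EH v where H: "H = ((VH, EH), v)" by (metis prod.collapse)
  show ?thesis using pres_csf[OF wG wH T p CG_pres[of VG EG u VH EH v N T, folded G H]] .
qed

lemma csf_Pk:
  assumes wG: "wf_rgraph G" and wH: "wf_rgraph H"
    and p: "pres G H N (pathE N) X eG eH \<phi>"
  shows "csf X = csf (Pk N G H)"
  unfolding Pk_CG by (rule csf_CG[OF wG wH _ p]) (auto simp: pathE_def)

lemma wf_K1: "wf_rgraph K1"
  by (simp add: wf_rgraph_def wf_graph_def K1_def)

lemma V3: "{0..g + h + j} = sig g j ` {0..g + h} \<union> (\<lambda>i. Suc g + i) ` {0..<j}"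
proof (rule set_eqI, rule iffI)
  fix n assume n: "n \<in> {0..g + h + j}"
  consider "n \<le> g" | "g < n" "n \<le> g + j" | "g + j < n" by linarith
  then show "n \<in> sig g j ` {0..g + h} \<union> (\<lambda>i. Suc g + i) ` {0..<j}"
  proof cases
    case 1 then have "n = sig g j n" "n \<in> {0..g + h}" by (auto simp: sig_def)
    then show ?thesis by blast
  next
    case 2 then have "n = Suc g + (n - Suc g)" "n - Suc g \<in> {0..<j}" by auto
    then show ?thesis by blast
  next
    case 3 then have "n = sig g j (n - j)" "n - j \<in> {0..g + h}" using n by (auto simp: sig_def)
    then show ?thesis by blast
  qed
next
  fix n assume "n \<in> sig g j ` {0..g + h} \<union> (\<lambda>i. Suc g + i) ` {0..<j}"
  then show "n \<in> {0..g + h + j}" by (auto simp: sig_def)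
qed

lemma sig_inj: "inj_on (sig g j) {0..g + h}"
  unfolding inj_on_def sig_def by auto

lemma sig_ne_tau: "sig g j s \<noteq> Suc g + i" if "i < j" for s i
  using that unfolding sig_def by auto

lemma sig_le: "s \<le> g + h \<Longrightarrow> sig g j s \<le> g + h + j"
  unfolding sig_def by auto

lemma V4:
  assumes h: "h \<ge> 1" and j: "j \<ge> 1"
  shows "{0..g + h + j} = {0..g} \<union> rho g h j ` {0..h + j - 1}"
proof (rule set_eqI, rule iffI)
  fix n assume n: "n \<in> {0..g + h + j}"
  consider "n \<le> g" | "g < n" "n \<le> g + j" | "g + j < n" by linarith
  then show "n \<in> {0..g} \<union> rho g h j ` {0..h + j - 1}"
  proof cases
    case 1 then show ?thesis by auto
  next
    case 2 then have "n = rho g h j (h + (n - Suc g))" "h + (n - Suc g) \<in> {0..h + j - 1}"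
      by (auto simp: rho_def)
    then show ?thesis by blast
  next
    case 3 then have "n = rho g h j (g + h + j - n)" "g + h + j - n \<in> {0..h + j - 1}"
      using n by (auto simp: rho_def)
    then show ?thesis by blast
  qed
next
  fix n assume "n \<in> {0..g} \<union> rho g h j ` {0..h + j - 1}"
  then show "n \<in> {0..g + h + j}" using h j by (auto simp: rho_def)
qed

lemma rho_inj: "inj_on (rho g h j) {0..h + j - 1}"
  unfolding inj_on_def rho_def by auto

lemma rho_range: "s \<le> h + j - 1 \<Longrightarrow> h \<ge> 1 \<Longrightarrow> Suc g \<le> rho g h j s \<and> rho g h j s \<le> g + h + j"
  unfolding rho_def by auto

lemma rho_0: "h \<ge> 1 \<Longrightarrow> rho g h j 0 = g + h + j"
  unfolding rho_def by auto

lemma rho_last: "j \<ge> 1 \<Longrightarrow> rho g h j (h + j - 1) = g + j"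
  unfolding rho_def by auto

lemma rho_N: "rho g h j n = g + h + j \<Longrightarrow> n \<le> h + j - 1 \<Longrightarrow> h \<ge> 1 \<Longrightarrow> n = 0"
  unfolding rho_def by (auto split: if_splits)

lemma CG_pos:
  assumes "N > 0"
  shows "CG N T ((VG, EG), u) ((VH, EH), v) =
    ((\<lambda>x. Inl (Inl x)) ` VG \<union> (\<lambda>y. Inl (Inr y)) ` VH \<union> pathpt (Inl (Inl u)) (Inl (Inr v)) Inr N ` {0..N},
     (\<lambda>e. (\<lambda>x. Inl (Inl x)) ` e) ` EG \<union> (\<lambda>e. (\<lambda>y. Inl (Inr y)) ` e) ` EH
       \<union> (\<lambda>e. pathpt (Inl (Inl u)) (Inl (Inr v)) Inr N ` e) ` T)"
  using assms unfolding CG_def Let_def leg_V_def by simp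

lemma pp_inj: "inj_on (pathpt (Inl (Inl u)) (Inl (Inr v)) Inr N) {0..N}"
  by (auto simp: inj_on_def pathpt_def split: if_splits)

lemma pp_0: "pathpt a b mid N 0 = a"
  by (simp add: pathpt_def)

lemma pp_N: "N > 0 \<Longrightarrow> pathpt a b mid N N = b"
  by (simp add: pathpt_def)

lemma pp_mid: "0 < n \<Longrightarrow> n \<noteq> N \<Longrightarrow> pathpt a b mid N n = mid n"
  by (simp add: pathpt_def)

lemma pp_InlInl: "pathpt (Inl (Inl u)) (Inl (Inr v)) Inr N n = Inl (Inl x) \<Longrightarrow> n = 0 \<and> x = u"
  by (auto simp: pathpt_def split: if_splits)

lemma pp_InlInr: "pathpt (Inl (Inl u)) (Inl (Inr v)) Inr N n = Inl (Inr y) \<Longrightarrow> n = N \<and> y = v \<and> N > 0"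
  by (auto simp: pathpt_def split: if_splits)

lemma pp_Inr: "pathpt (Inl (Inl u)) (Inl (Inr v)) Inr N n = Inr k \<Longrightarrow> n = k"
  by (auto simp: pathpt_def split: if_splits)

lemma wf_parts:
  assumes "wf_rgraph ((V, E), u)"
  shows "finite V" "\<forall>e\<in>E. e \<subseteq> V" "u \<in> V"
  using assms by (auto simp: wf_rgraph_def wf_graph_def)

lemma T3:
  fixes VG :: "'a set" and VH :: "'b set"
  assumes wG: "wf_rgraph ((VG, EG), u)" and wH: "wf_rgraph ((VH, EH), v)" and h: "h \<ge> 1" and j: "j \<ge> 1"
  shows "csf (CG (g + h + j) (insert {g, g + j + 1} (Dset g h j)) ((VG, EG), u) ((VH, EH), v))
       = sf_mult (csf (path_graph j)) (csf (Pk (g + h) ((VG, EG), u) ((VH, EH), v)))"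
proof -
  define N where "N = g + h + j"
  define p :: "nat \<Rightarrow> ('a + 'b) + nat" where "p = pathpt (Inl (Inl u)) (Inl (Inr v)) Inr N"
  define B where "B = (\<lambda>i. p (Suc g + i)) ` {0..<j}"
  define EB where "EB = (\<lambda>e. (\<lambda>i. p (Suc g + i)) ` e) ` snd (path_graph j)"
  define A where "A = (\<lambda>x. Inl (Inl x)) ` VG \<union> (\<lambda>y. Inl (Inr y)) ` VH \<union> (\<lambda>s. p (sig g j s)) ` {0..g + h}"
  define EA where "EA = (\<lambda>e. (\<lambda>x. Inl (Inl x)) ` e) ` EG \<union> (\<lambda>e. (\<lambda>y. Inl (Inr y)) ` e) ` EH
      \<union> (\<lambda>e. (\<lambda>s. p (sig g j s)) ` e) ` pathE (g + h)"
  have N0: "N > 0" using h by (simp add: N_def)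
  note G = wf_parts[OF wG] and H = wf_parts[OF wH]
  have vert: "p ` {0..N} = (\<lambda>s. p (sig g j s)) ` {0..g + h} \<union> (\<lambda>i. p (Suc g + i)) ` {0..<j}"
    unfolding N_def V3 by (simp add: image_Un image_image)
  have CGeq: "CG N (insert {g, g + j + 1} (Dset g h j)) ((VG, EG), u) ((VH, EH), v) = (B \<union> A, EB \<union> EA)"
    unfolding CG_pos[OF N0] N3[OF h] p_def[symmetric] vert A_def B_def EA_def EB_def
    by (simp add: image_Un image_image Un_ac)
  have pInr: "p n = Inr n" if "0 < n" "n < N" for n
    using that unfolding p_def by (simp add: pp_mid)
  have finB: "finite B" unfolding B_def by simp
  have finA: "finite A" unfolding A_def using G(1) H(1) by simp
  have disj: "B \<inter> A = {}"
  proof -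
    have "b \<notin> A" if "b \<in> B" for b
    proof -
      obtain i where i: "i < j" "b = p (Suc g + i)" using \<open>b \<in> B\<close> unfolding B_def by auto
      have bI: "b = Inr (Suc g + i)" using i pInr[of "Suc g + i"] h by (simp add: N_def)
      show ?thesis
      proof
        assume "b \<in> A"
        then obtain s where "s \<in> {0..g + h}" "b = p (sig g j s)" unfolding A_def bI by auto
        then have "sig g j s = Suc g + i" using bI pp_Inr unfolding p_def by metis
        then show False using sig_ne_tau i(1) by metis
      qed
    qed
    then show ?thesis by blast
  qed
  have eB: "\<forall>e\<in>EB. e \<subseteq> B" unfolding EB_def B_def path_graph_def by auto
  have eA: "\<forall>e\<in>EA. e \<subseteq> A"
  proof
    fix e assume "e \<in> EA"
    then consider e' where "e' \<in> EG" "e = (\<lambda>x. Inl (Inl x)) ` e'"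
      | e' where "e' \<in> EH" "e = (\<lambda>y. Inl (Inr y)) ` e'"
      | s where "s < g + h" "e = (\<lambda>s. p (sig g j s)) ` {s, Suc s}"
      unfolding EA_def pathE_def by blast
    then show "e \<subseteq> A"
    proof cases
      case 1 then show ?thesis using G(2) unfolding A_def by blast
    next
      case 2 then show ?thesis using H(2) unfolding A_def by blast
    next
      case 3 then show ?thesis unfolding A_def by auto
    qed
  qed
  have split: "csf (B \<union> A, EB \<union> EA) = sf_mult (csf (B, EB)) (csf (A, EA))"
    by (rule csf_split[OF finB finA disj eB eA])
  have injB: "inj_on (\<lambda>i. p (Suc g + i)) {0..<j}"
  proof (rule inj_onI)
    fix a b assume "a \<in> {0..<j}" "b \<in> {0..<j}" "p (Suc g + a) = p (Suc g + b)"
    then show "a = b" using pInr[of "Suc g + a"] pInr[of "Suc g + b"] using h by (simp add: N_def)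
  qed
  have isoB: "csf (B, EB) = csf (path_graph j)"
  proof -
    have "csf (B, EB) = csf ({0..<j}, snd (path_graph j))"
      unfolding B_def EB_def
      by (rule csf_iso[OF injB]) (auto simp: path_graph_def)
    then show ?thesis by (simp add: path_graph_def)
  qed
  have injA: "inj_on (\<lambda>s. p (sig g j s)) {0..g + h}"
  proof (rule comp_inj_on[OF sig_inj, unfolded o_def])
    show "inj_on p (sig g j ` {0..g + h})"
      using pp_inj[of u v N] unfolding p_def[symmetric]
      by (rule inj_on_subset) (auto simp: N_def sig_le)
  qed
  have presA: "pres ((VG, EG), u) ((VH, EH), v) (g + h) (pathE (g + h)) (A, EA)
     (\<lambda>x. Inl (Inl x)) (\<lambda>y. Inl (Inr y)) (\<lambda>s. p (sig g j s))"
    unfolding pres_def fst_conv snd_conv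
  proof (intro conjI)
    show "inj_on (\<lambda>x. Inl (Inl x) :: ('a + 'b) + nat) VG" by (simp add: inj_on_def)
    show "inj_on (\<lambda>y. Inl (Inr y) :: ('a + 'b) + nat) VH" by (simp add: inj_on_def)
    show "inj_on (\<lambda>s. p (sig g j s)) {0..g + h}" by (rule injA)
    show "p (sig g j 0) = Inl (Inl u)" by (simp add: sig_def p_def pp_0)
    show "p (sig g j (g + h)) = Inl (Inr v)" using h by (simp add: sig_def p_def pp_N N_def)
    show "\<forall>x\<in>VG. \<forall>n\<in>{0..g + h}. Inl (Inl x) = p (sig g j n) \<longrightarrow> n = 0"
      unfolding p_def by (auto dest!: sym[THEN pp_InlInl] simp: sig_def split: if_splits)
    show "\<forall>y\<in>VH. \<forall>n\<in>{0..g + h}. Inl (Inr y) = p (sig g j n) \<longrightarrow> n = g + h"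
      unfolding p_def using h by (auto dest!: sym[THEN pp_InlInr] simp: sig_def N_def split: if_splits)
    show "\<forall>x\<in>VG. \<forall>y\<in>VH. (Inl (Inl x) :: ('a + 'b) + nat) = Inl (Inr y) \<longrightarrow> x = u \<and> y = v \<and> g + h = 0"
      by simp
    show "(A, EA) = ((\<lambda>x. Inl (Inl x)) ` VG \<union> (\<lambda>y. Inl (Inr y)) ` VH \<union> (\<lambda>s. p (sig g j s)) ` {0..g + h},
      (\<lambda>e. (\<lambda>x. Inl (Inl x)) ` e) ` EG \<union> (\<lambda>e. (\<lambda>y. Inl (Inr y)) ` e) ` EH \<union> (\<lambda>e. (\<lambda>s. p (sig g j s)) ` e) ` pathE (g + h))"
      unfolding A_def EA_def ..
  qed
  have isoA: "csf (A, EA) = csf (Pk (g + h) ((VG, EG), u) ((VH, EH), v))"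
    by (rule csf_Pk[OF wG wH presA])
  show ?thesis using CGeq split isoA isoB by (simp add: N_def)
qed

lemma T4:
  fixes VG :: "'a set" and VH :: "'b set"
  assumes wG: "wf_rgraph ((VG, EG), u)" and wH: "wf_rgraph ((VH, EH), v)" and h: "h \<ge> 1" and j: "j \<ge> 1"
  shows "csf (CG (g + h + j) (insert {Suc g, g + j + 1} (Dset g h j)) ((VG, EG), u) ((VH, EH), v))
       = sf_mult (csf (pend ((VG, EG), u) g)) (csf (pend ((VH, EH), v) (h + j - 1)))"
proof -
  define N where "N = g + h + j"
  define p :: "nat \<Rightarrow> ('a + 'b) + nat" where "p = pathpt (Inl (Inl u)) (Inl (Inr v)) Inr N"
  define A where "A = (\<lambda>x. Inl (Inl x)) ` VG \<union> p ` {0..g}"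
  define EA where "EA = (\<lambda>e. (\<lambda>x. Inl (Inl x)) ` e) ` EG \<union> (\<lambda>e. p ` e) ` pathE g"
  define B where "B = (\<lambda>y. Inl (Inr y)) ` VH \<union> (\<lambda>s. p (rho g h j s)) ` {0..h + j - 1}"
  define EB where "EB = (\<lambda>e. (\<lambda>y. Inl (Inr y)) ` e) ` EH \<union> (\<lambda>e. (\<lambda>s. p (rho g h j s)) ` e) ` pathE (h + j - 1)"
  have N0: "N > 0" using h by (simp add: N_def)
  note G = wf_parts[OF wG] and H = wf_parts[OF wH]
  have pinj: "inj_on p {0..N}" unfolding p_def by (rule pp_inj)
  have rr: "Suc g \<le> rho g h j s \<and> rho g h j s \<le> N" if "s \<le> h + j - 1" for s
    using rho_range[OF that h] by (simp add: N_def)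
  have vert: "p ` {0..N} = p ` {0..g} \<union> (\<lambda>s. p (rho g h j s)) ` {0..h + j - 1}"
    unfolding N_def V4[OF h j] by (simp add: image_Un image_image)
  have CGeq: "CG N (insert {Suc g, g + j + 1} (Dset g h j)) ((VG, EG), u) ((VH, EH), v) = (A \<union> B, EA \<union> EB)"
    unfolding CG_pos[OF N0] N4[OF h j] p_def[symmetric] vert A_def B_def EA_def EB_def
    by (simp add: image_Un image_image Un_ac)
  have finA: "finite A" unfolding A_def using G(1) by simp
  have finB: "finite B" unfolding B_def using H(1) by simp
  have disj: "A \<inter> B = {}"
  proof -
    have "a \<notin> B" if "a \<in> A" for a
    proof
      assume aB: "a \<in> B"
      consider x where "a = Inl (Inl x)" | n where "n \<le> g" "a = p n" using \<open>a \<in> A\<close> unfolding A_def by auto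
      then show False
      proof cases
        case (1 x)
        then obtain s where "s \<le> h + j - 1" "Inl (Inl x) = p (rho g h j s)" using aB unfolding B_def by auto
        then show False using rr pp_InlInl unfolding p_def by (metis Suc_le_lessD not_less_zero)
      next
        case (2 n)
        consider y where "a = Inl (Inr y)" | s where "s \<le> h + j - 1" "a = p (rho g h j s)"
          using aB unfolding B_def by auto
        then show False
        proof cases
          case (1 y)
          then have "n = N" using 2 pp_InlInr unfolding p_def by metis
          then show False using 2 h by (simp add: N_def)
        next
          case (2 s)
          then have "n = rho g h j s" using \<open>n \<le> g\<close> \<open>a = p n\<close> rr[OF 2(1)] pinj
            by (auto simp: N_def inj_on_def)
          then show False using rr[OF 2(1)] \<open>n \<le> g\<close> by simp
        qed
      qed
    qed
    then show ?thesis by blast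
  qed
  have eA: "\<forall>e\<in>EA. e \<subseteq> A"
  proof
    fix e assume "e \<in> EA"
    then consider e' where "e' \<in> EG" "e = (\<lambda>x. Inl (Inl x)) ` e'"
      | s where "s < g" "e = p ` {s, Suc s}"
      unfolding EA_def pathE_def by blast
    then show "e \<subseteq> A"
    proof cases
      case 1 then show ?thesis using G(2) unfolding A_def by blast
    next
      case 2 then show ?thesis unfolding A_def by auto
    qed
  qed
  have eB: "\<forall>e\<in>EB. e \<subseteq> B"
  proof
    fix e assume "e \<in> EB"
    then consider e' where "e' \<in> EH" "e = (\<lambda>y. Inl (Inr y)) ` e'"
      | s where "s < h + j - 1" "e = (\<lambda>s. p (rho g h j s)) ` {s, Suc s}"
      unfolding EB_def pathE_def by blast
    then show "e \<subseteq> B"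
    proof cases
      case 1 then show ?thesis using H(2) unfolding B_def by blast
    next
      case 2 then show ?thesis unfolding B_def by auto
    qed
  qed
  have split: "csf (A \<union> B, EA \<union> EB) = sf_mult (csf (A, EA)) (csf (B, EB))"
    by (rule csf_split[OF finA finB disj eA eB])
  have presA: "pres ((VG, EG), u) K1 g (pathE g) (A, EA) (\<lambda>x. Inl (Inl x)) (\<lambda>_. p g) p"
    unfolding pres_def fst_conv snd_conv K1_def
  proof (intro conjI)
    show "inj_on (\<lambda>x. Inl (Inl x) :: ('a + 'b) + nat) VG" by (simp add: inj_on_def)
    show "inj_on (\<lambda>_. p g) {()}" by simp
    show "inj_on p {0..g}" using pinj by (rule inj_on_subset) (auto simp: N_def)
    show "p 0 = Inl (Inl u)" by (simp add: p_def pp_0)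
    show "p g = p g" ..
    show "\<forall>x\<in>VG. \<forall>n\<in>{0..g}. Inl (Inl x) = p n \<longrightarrow> n = 0"
      unfolding p_def by (auto dest!: sym[THEN pp_InlInl])
    show "\<forall>y\<in>{()}. \<forall>n\<in>{0..g}. p g = p n \<longrightarrow> n = g"
      using pinj by (auto simp: N_def inj_on_def)
    show "\<forall>x\<in>VG. \<forall>y\<in>{()}. Inl (Inl x) = p g \<longrightarrow> x = u \<and> y = () \<and> g = 0"
      unfolding p_def by (auto dest!: sym[THEN pp_InlInl])
    show "(A, EA) = ((\<lambda>x. Inl (Inl x)) ` VG \<union> (\<lambda>_. p g) ` {()} \<union> p ` {0..g},
       (\<lambda>e. (\<lambda>x. Inl (Inl x)) ` e) ` EG \<union> (\<lambda>e. (\<lambda>_. p g) ` e) ` {} \<union> (\<lambda>e. p ` e) ` pathE g)"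
      unfolding A_def EA_def by auto
  qed
  have rinj: "inj_on (\<lambda>s. p (rho g h j s)) {0..h + j - 1}"
  proof (rule comp_inj_on[OF rho_inj, unfolded o_def])
    show "inj_on p (rho g h j ` {0..h + j - 1})"
      using pinj by (rule inj_on_subset) (use rr in auto)
  qed
  have presB: "pres ((VH, EH), v) K1 (h + j - 1) (pathE (h + j - 1)) (B, EB)
      (\<lambda>y. Inl (Inr y)) (\<lambda>_. p (g + j)) (\<lambda>s. p (rho g h j s))"
    unfolding pres_def fst_conv snd_conv K1_def
  proof (intro conjI)
    show "inj_on (\<lambda>y. Inl (Inr y) :: ('a + 'b) + nat) VH" by (simp add: inj_on_def)
    show "inj_on (\<lambda>_. p (g + j)) {()}" by simp
    show "inj_on (\<lambda>s. p (rho g h j s)) {0..h + j - 1}" by (rule rinj)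
    show "p (rho g h j 0) = Inl (Inr v)" using h N0 by (simp add: rho_0 p_def pp_N N_def)
    show "p (rho g h j (h + j - 1)) = p (g + j)" using rho_last[OF j] by simp
    show "\<forall>y\<in>VH. \<forall>n\<in>{0..h + j - 1}. Inl (Inr y) = p (rho g h j n) \<longrightarrow> n = 0"
    proof (intro ballI impI)
      fix y n assume "n \<in> {0..h + j - 1}" "Inl (Inr y) = p (rho g h j n)"
      then have "rho g h j n = g + h + j" "n \<le> h + j - 1"
        using pp_InlInr unfolding p_def N_def by (metis, simp)
      then show "n = 0" using rho_N h by blast
    qed
    show "\<forall>y\<in>{()}. \<forall>n\<in>{0..h + j - 1}. p (g + j) = p (rho g h j n) \<longrightarrow> n = h + j - 1"
    proof (intro ballI impI)
      fix y n assume n: "n \<in> {0..h + j - 1}" and eq: "p (g + j) = p (rho g h j n)"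
      have "rho g h j n = g + j" using eq pinj rr[of n] n unfolding inj_on_def by (auto simp: N_def)
      then have "rho g h j n = rho g h j (h + j - 1)" using rho_last[OF j] by simp
      then show "n = h + j - 1" using rho_inj n unfolding inj_on_def by auto
    qed
    show "\<forall>x\<in>VH. \<forall>y\<in>{()}. Inl (Inr x) = p (g + j) \<longrightarrow> x = v \<and> y = () \<and> h + j - 1 = 0"
    proof (intro ballI impI)
      fix x y assume "Inl (Inr x) = p (g + j)"
      then have "g + j = N" using pp_InlInr unfolding p_def by metis
      then show "x = v \<and> y = () \<and> h + j - 1 = 0" using h by (simp add: N_def)
    qed
    show "(B, EB) = ((\<lambda>y. Inl (Inr y)) ` VH \<union> (\<lambda>_. p (g + j)) ` {()} \<union> (\<lambda>s. p (rho g h j s)) ` {0..h + j - 1},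
       (\<lambda>e. (\<lambda>y. Inl (Inr y)) ` e) ` EH \<union> (\<lambda>e. (\<lambda>_. p (g + j)) ` e) ` {} \<union> (\<lambda>e. (\<lambda>s. p (rho g h j s)) ` e) ` pathE (h + j - 1))"
    proof -
      have "p (g + j) \<in> (\<lambda>s. p (rho g h j s)) ` {0..h + j - 1}"
        using j rho_last[OF j] by (intro image_eqI[where x="h + j - 1"]) simp_all
      then show ?thesis unfolding B_def EB_def by auto
    qed
  qed
  have isoA: "csf (A, EA) = csf (pend ((VG, EG), u) g)"
    unfolding pend_def by (rule csf_Pk[OF wG wf_K1 presA])
  have isoB: "csf (B, EB) = csf (pend ((VH, EH), v) (h + j - 1))"
    unfolding pend_def by (rule csf_Pk[OF wH wf_K1 presB])
  show ?thesis using CGeq split isoA isoB by (simp add: N_def)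
qed

lemma step:
  fixes VG :: "'a set" and VH :: "'b set"
  assumes wG: "wf_rgraph ((VG, EG), u)" and wH: "wf_rgraph ((VH, EH), v)" and h: "h \<ge> 1" and j: "j \<ge> 1"
  shows "csf (CG (g + h + j) (linT g h j) ((VG, EG), u) ((VH, EH), v)) m
           - sf_mult (csf (path_graph j)) (csf (Pk (g + h) ((VG, EG), u) ((VH, EH), v))) m
       = csf (CG (g + h + j) (linT (Suc g) h (j - 1)) ((VG, EG), u) ((VH, EH), v)) m
           - sf_mult (csf (pend ((VG, EG), u) g)) (csf (pend ((VH, EH), v) (h + j - 1))) m"
proof -
  define N where "N = g + h + j"
  have N0: "N > 0" using h by (simp add: N_def)
  define p :: "nat \<Rightarrow> ('a + 'b) + nat" where "p = pathpt (Inl (Inl u)) (Inl (Inr v)) Inr N"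
  define X where "X = CG N (Dset g h j) ((VG, EG), u) ((VH, EH), v)"
  have ins: "CG N (insert e T) ((VG, EG), u) ((VH, EH), v) = (fst (CG N T ((VG, EG), u) ((VH, EH), v)),
      insert (p ` e) (snd (CG N T ((VG, EG), u) ((VH, EH), v))))" for e T
    unfolding CG_pos[OF N0] p_def by simp
  have fin: "finite (fst X)" unfolding X_def CG_pos[OF N0] using wf_parts(1)[OF wG] wf_parts(1)[OF wH] by simp
  have e1: "CG N (linT g h j) ((VG, EG), u) ((VH, EH), v) = (fst X, insert {p g, p (Suc g)} (insert {p g, p (g + j + 1)} (snd X)))"
    unfolding N1[OF j] ins X_def by simp
  have e2: "CG N (linT (Suc g) h (j - 1)) ((VG, EG), u) ((VH, EH), v) = (fst X, insert {p g, p (Suc g)} (insert {p (Suc g), p (g + j + 1)} (snd X)))"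
    unfolding N2[OF j] ins X_def by simp
  have e3: "CG N (insert {g, g + j + 1} (Dset g h j)) ((VG, EG), u) ((VH, EH), v) = (fst X, insert {p g, p (g + j + 1)} (snd X))"
    unfolding ins X_def by simp
  have e4: "CG N (insert {Suc g, g + j + 1} (Dset g h j)) ((VG, EG), u) ((VH, EH), v) = (fst X, insert {p (Suc g), p (g + j + 1)} (snd X))"
    unfolding ins X_def by simp
  have sw: "csf (fst X, insert {p g, p (Suc g)} (insert {p g, p (g + j + 1)} (snd X))) m - csf (fst X, insert {p g, p (g + j + 1)} (snd X)) m
      = csf (fst X, insert {p g, p (Suc g)} (insert {p (Suc g), p (g + j + 1)} (snd X))) m - csf (fst X, insert {p (Suc g), p (g + j + 1)} (snd X)) m"
    by (rule csf_swap[OF fin])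
  show ?thesis
    using sw T3[OF wG wH h j, of g] T4[OF wG wH h j, of g]
    unfolding N_def[symmetric] e1 e2 e3[symmetric] e4[symmetric] by simp
qed

lemma csf_P0: "csf (path_graph 0) a = (if a = 0 then 1 else 0)"
proof -
  have "Col (path_graph 0) a = (if a = 0 then {\<lambda>_. undefined} else {})"
  proof (cases "a = 0")
    case True
    then show ?thesis by (auto simp: Col_def path_graph_def proper_col_def PiE_def extensional_def)
  next
    case False
    then obtain c where "Poly_Mapping.lookup a c \<noteq> 0" by (metis lookup_zero poly_mapping_eqI)
    then show ?thesis using False by (auto simp: Col_def path_graph_def)
  qed
  then show ?thesis by (simp add: csf_Col)
qed

lemma sf_mult_P0: "sf_mult (csf (path_graph 0)) F m = F m"
proof -
  have "sf_mult (csf (path_graph 0)) F m = (\<Sum>p\<in>{(a, b). a + b = m}. if p = (0, m) then F m else 0)"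
    unfolding sf_mult_def csf_P0 by (rule sum.cong) auto
  also have "\<dots> = F m" using finite_splits[of m] by (simp add: sum.delta)
  finally show ?thesis .
qed

definition RHS :: "'a rgraph \<Rightarrow> 'b rgraph \<Rightarrow> nat \<Rightarrow> nat \<Rightarrow> nat \<Rightarrow> sf" where
  "RHS G H g h j = (\<lambda>m. (\<Sum>i = 0..j. sf_mult (csf (path_graph i)) (csf (Pk (g + h + j - i) G H)) m)
              - (\<Sum>i = 1..j. sf_mult (csf (pend G (g + i - 1))) (csf (pend H (h + j - i))) m))"

lemma RHS_0: "RHS G H g h 0 m = csf (Pk (g + h) G H) m"
  unfolding RHS_def by (simp add: sf_mult_P0)

lemma RHS_Suc: "RHS G H g h (Suc k) m = RHS G H (Suc g) h k m
   + sf_mult (csf (path_graph (Suc k))) (csf (Pk (g + h) G H)) m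
   - sf_mult (csf (pend G g)) (csf (pend H (h + k))) m"
proof -
  have s1: "(\<Sum>i = 0..Suc k. sf_mult (csf (path_graph i)) (csf (Pk (g + h + Suc k - i) G H)) m)
     = (\<Sum>i = 0..k. sf_mult (csf (path_graph i)) (csf (Pk (Suc g + h + k - i) G H)) m)
       + sf_mult (csf (path_graph (Suc k))) (csf (Pk (g + h) G H)) m"
  proof -
    have "(\<Sum>i = 0..k. sf_mult (csf (path_graph i)) (csf (Pk (g + h + Suc k - i) G H)) m)
        = (\<Sum>i = 0..k. sf_mult (csf (path_graph i)) (csf (Pk (Suc g + h + k - i) G H)) m)"
      by (rule sum.cong) auto
    then show ?thesis by (simp add: sum.atLeast0_atMost_Suc)
  qed
  have s2: "(\<Sum>i = 1..Suc k. sf_mult (csf (pend G (g + i - 1))) (csf (pend H (h + Suc k - i))) m)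
     = sf_mult (csf (pend G g)) (csf (pend H (h + k))) m
       + (\<Sum>i = 1..k. sf_mult (csf (pend G (Suc g + i - 1))) (csf (pend H (h + k - i))) m)"
  proof -
    have "(\<Sum>i = 1..Suc k. sf_mult (csf (pend G (g + i - 1))) (csf (pend H (h + Suc k - i))) m)
       = sf_mult (csf (pend G (g + 1 - 1))) (csf (pend H (h + Suc k - 1))) m
         + (\<Sum>i = Suc 1..Suc k. sf_mult (csf (pend G (g + i - 1))) (csf (pend H (h + Suc k - i))) m)"
      by (rule sum.atLeast_Suc_atMost) simp
    also have "(\<Sum>i = Suc 1..Suc k. sf_mult (csf (pend G (g + i - 1))) (csf (pend H (h + Suc k - i))) m)
       = (\<Sum>i = 1..k. sf_mult (csf (pend G (g + Suc i - 1))) (csf (pend H (h + Suc k - Suc i))) m)"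
      by (rule sum.shift_bounds_cl_Suc_ivl)
    also have "\<dots> = (\<Sum>i = 1..k. sf_mult (csf (pend G (Suc g + i - 1))) (csf (pend H (h + k - i))) m)"
      by (rule sum.cong) auto
    finally show ?thesis by simp
  qed
  show ?thesis unfolding RHS_def s1 s2 by simp
qed

lemma main_CG:
  fixes VG :: "'a set" and VH :: "'b set"
  assumes wG: "wf_rgraph ((VG, EG), u)" and wH: "wf_rgraph ((VH, EH), v)" and h: "h \<ge> 1"
  shows "csf (CG (g + h + j) (linT g h j) ((VG, EG), u) ((VH, EH), v)) = RHS ((VG, EG), u) ((VH, EH), v) g h j"
proof (induction j arbitrary: g)
  case 0
  have "linT g h 0 = pathE (g + h)" using spT_lin[OF h, of g 0] spT_0[of g h] by simp
  then show ?case by (simp add: fun_eq_iff RHS_0 Pk_CG)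
next
  case (Suc k)
  have IH: "csf (CG (Suc g + h + k) (linT (Suc g) h k) ((VG, EG), u) ((VH, EH), v)) m = RHS ((VG, EG), u) ((VH, EH), v) (Suc g) h k m" for m
    using Suc.IH[of "Suc g"] by simp
  show ?case
  proof
    fix m
    have st: "csf (CG (g + h + Suc k) (linT g h (Suc k)) ((VG, EG), u) ((VH, EH), v)) m
           - sf_mult (csf (path_graph (Suc k))) (csf (Pk (g + h) ((VG, EG), u) ((VH, EH), v))) m
       = csf (CG (g + h + Suc k) (linT (Suc g) h k) ((VG, EG), u) ((VH, EH), v)) m
           - sf_mult (csf (pend ((VG, EG), u) g)) (csf (pend ((VH, EH), v) (h + k))) m"
      using step[OF wG wH h, of "Suc k" g m] by simp
    have "g + h + Suc k = Suc g + h + k" by simp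
    then show "csf (CG (g + h + Suc k) (linT g h (Suc k)) ((VG, EG), u) ((VH, EH), v)) m = RHS ((VG, EG), u) ((VH, EH), v) g h (Suc k) m"
      using st IH[of m] RHS_Suc[of "((VG, EG), u)" "((VH, EH), v)" g h k m] by simp
  qed
qed

lemma img_reindex: "(\<And>s. s \<in> A \<Longrightarrow> f s = \<phi> (q s)) \<Longrightarrow> q ` A = B \<Longrightarrow> f ` A = \<phi> ` B"
  by (metis image_cong image_image)

lemma rev_img: "(\<lambda>s. g - s) ` {0..g} = {0..(g::nat)}"
proof (rule set_eqI, rule iffI)
  fix n assume "n \<in> {0..g}" then show "n \<in> (\<lambda>s. g - s) ` {0..g}"
    by (intro image_eqI[where x="g - n"]) auto
qed auto

lemma q3_img: "(\<lambda>s. if s = 0 then g else g + s) ` {0..j} = {g..g + (j::nat)}"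
proof (rule set_eqI, rule iffI)
  fix n assume "n \<in> {g..g + j}" then show "n \<in> (\<lambda>s. if s = 0 then g else g + s) ` {0..j}"
    by (intro image_eqI[where x="n - g"]) auto
qed auto

lemma q2_img: "(\<lambda>s. if s = 0 then g else g + j + s) ` {0..h} = insert g {g + j + 1..g + j + (h::nat)}"
proof (rule set_eqI, rule iffI)
  fix n assume "n \<in> insert g {g + j + 1..g + j + h}" then show "n \<in> (\<lambda>s. if s = 0 then g else g + j + s) ` {0..h}"
  proof (cases "n = g")
    case True then show ?thesis by (intro image_eqI[where x=0]) auto
  next
    case False then show ?thesis using \<open>n \<in> _\<close> by (intro image_eqI[where x="n - g - j"]) auto
  qed
qed auto

lemma compr_img2: "(\<lambda>e. \<phi> ` e) ` {{a s, b s} | s. s < k} = (\<lambda>s. {\<phi> (a s), \<phi> (b s)}) ` {..<k}"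
  unfolding compr_img image_image by simp

lemma star_unf:
  "star g h j ((VG, EG), u) ((VH, EH), v) K1 =
    (let c = Inr (0, 0);
         emb1 = (\<lambda>x. if g = 0 \<and> x = u then c else Inl (Inl x));
         emb2 = (\<lambda>y. if h = 0 \<and> y = v then c else Inl (Inr (Inl y)));
         w3 = (if j = 0 then c else Inl (Inr (Inr ())));
         pp1 = pathpt c (emb1 u) (\<lambda>s. Inr (1, s)) g;
         pp2 = pathpt c (emb2 v) (\<lambda>s. Inr (2, s)) h;
         pp3 = pathpt c w3 (\<lambda>s. Inr (3, s)) j
     in ({c} \<union> emb1 ` VG \<union> emb2 ` VH \<union> {w3} \<union> pp1 ` {0..g} \<union> pp2 ` {0..h} \<union> pp3 ` {0..j},
         (\<lambda>e. emb1 ` e) ` EG \<union> (\<lambda>e. emb2 ` e) ` EH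
           \<union> (\<lambda>s. {pp1 s, pp1 (Suc s)}) ` {..<g} \<union> (\<lambda>s. {pp2 s, pp2 (Suc s)}) ` {..<h}
           \<union> (\<lambda>s. {pp3 s, pp3 (Suc s)}) ` {..<j}))"
  unfolding star_def K1_def Let_def leg_V_def leg_E_def compr_img
  by (simp only: image_insert image_empty Un_empty_right fst_conv snd_conv simp_thms)

lemma star_csf:
  fixes VG :: "'a set" and VH :: "'b set"
  assumes wG: "wf_rgraph ((VG, EG), u)" and wH: "wf_rgraph ((VH, EH), v)" and h: "h \<ge> 1"
  shows "csf (star g h j ((VG, EG), u) ((VH, EH), v) K1) = csf (CG (g + h + j) (linT g h j) ((VG, EG), u) ((VH, EH), v))"
proof -
  define N where "N = g + h + j"
  define c :: "('a + 'b + unit) + nat \<times> nat" where "c = Inr (0, 0)"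
  define emb1 where "emb1 = (\<lambda>x. if g = 0 \<and> x = u then c else Inl (Inl x))"
  define emb2 :: "'b \<Rightarrow> ('a + 'b + unit) + nat \<times> nat" where "emb2 = (\<lambda>y. Inl (Inr (Inl y)))"
  define w3 :: "('a + 'b + unit) + nat \<times> nat" where "w3 = (if j = 0 then c else Inl (Inr (Inr ())))"
  define pp1 where "pp1 = pathpt c (emb1 u) (\<lambda>s. Inr (1, s)) g"
  define pp2 where "pp2 = pathpt c (emb2 v) (\<lambda>s. Inr (2, s)) h"
  define pp3 where "pp3 = pathpt c w3 (\<lambda>s. Inr (3, s)) j"
  define \<phi> where "\<phi> = (\<lambda>n. if n \<le> g then pp1 (g - n) else if n \<le> g + j then pp3 (n - g) else pp2 (n - g - j))"
  have h0: "h \<noteq> 0" using h by simp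
  have emb2': "(\<lambda>y. if h = 0 \<and> y = v then c else Inl (Inr (Inl y))) = emb2" using h0 unfolding emb2_def by simp
  have unf: "star g h j ((VG, EG), u) ((VH, EH), v) K1 =
     ({c} \<union> emb1 ` VG \<union> emb2 ` VH \<union> {w3} \<union> pp1 ` {0..g} \<union> pp2 ` {0..h} \<union> pp3 ` {0..j},
         (\<lambda>e. emb1 ` e) ` EG \<union> (\<lambda>e. emb2 ` e) ` EH
           \<union> (\<lambda>s. {pp1 s, pp1 (Suc s)}) ` {..<g} \<union> (\<lambda>s. {pp2 s, pp2 (Suc s)}) ` {..<h}
           \<union> (\<lambda>s. {pp3 s, pp3 (Suc s)}) ` {..<j})"
    unfolding star_unf Let_def
    by (simp only: c_def emb1_def emb2_def w3_def pp1_def pp2_def pp3_def h0 simp_thms if_False)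
  have L1: "\<phi> (g - s) = pp1 s" if "s \<le> g" for s
    using that unfolding \<phi>_def by simp
  have L2: "\<phi> (if s = 0 then g else g + j + s) = pp2 s" if "s \<le> h" for s
    using that unfolding \<phi>_def pp1_def pp2_def by (simp add: pathpt_def)
  have L3: "\<phi> (if s = 0 then g else g + s) = pp3 s" if "s \<le> j" for s
    using that unfolding \<phi>_def pp1_def pp3_def by (simp add: pathpt_def)
  have I1: "pp1 ` {0..g} = \<phi> ` {0..g}"
    by (rule img_reindex[OF _ rev_img]) (simp add: L1)
  have I2: "pp2 ` {0..h} = \<phi> ` (insert g {g + j + 1..g + j + h})"
    by (rule img_reindex[OF _ q2_img]) (simp add: L2)
  have I3: "pp3 ` {0..j} = \<phi> ` {g..g + j}"
    by (rule img_reindex[OF _ q3_img]) (simp add: L3)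
  have ivl: "{0..g} \<union> insert g {g + j + 1..g + j + h} \<union> {g..g + j} = {0..N}"
    unfolding N_def by auto
  have Vimg: "pp1 ` {0..g} \<union> pp2 ` {0..h} \<union> pp3 ` {0..j} = \<phi> ` {0..N}"
    unfolding I1 I2 I3 ivl[symmetric] by (simp add: image_Un)
  have cin: "c \<in> pp1 ` {0..g}" unfolding pp1_def by (intro image_eqI[where x=0]) (simp_all add: pathpt_def)
  have win: "w3 \<in> pp3 ` {0..j}" unfolding pp3_def w3_def by (intro image_eqI[where x=j]) (simp_all add: pathpt_def)
  have Veq: "{c} \<union> emb1 ` VG \<union> emb2 ` VH \<union> {w3} \<union> pp1 ` {0..g} \<union> pp2 ` {0..h} \<union> pp3 ` {0..j}
      = emb1 ` VG \<union> emb2 ` VH \<union> \<phi> ` {0..N}"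
    using cin win Vimg by blast
  have E1: "(\<lambda>e. \<phi> ` e) ` {{g - s, g - Suc s} | s. s < g} = (\<lambda>s. {pp1 s, pp1 (Suc s)}) ` {..<g}"
    unfolding compr_img2 by (rule image_cong) (simp_all add: L1)
  have E2: "(\<lambda>e. \<phi> ` e) ` {{if s = 0 then g else g + j + s, g + j + Suc s} | s. s < h} = (\<lambda>s. {pp2 s, pp2 (Suc s)}) ` {..<h}"
  proof -
    have "\<phi> (g + j + Suc s) = pp2 (Suc s)" if "s < h" for s using L2[of "Suc s"] that by simp
    then show ?thesis unfolding compr_img2 by (intro image_cong) (simp_all add: L2)
  qed
  have E3: "(\<lambda>e. \<phi> ` e) ` {{if s = 0 then g else g + s, g + Suc s} | s. s < j} = (\<lambda>s. {pp3 s, pp3 (Suc s)}) ` {..<j}"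
  proof -
    have "\<phi> (g + Suc s) = pp3 (Suc s)" if "s < j" for s using L3[of "Suc s"] that by simp
    then show ?thesis unfolding compr_img2 by (intro image_cong) (simp_all add: L3)
  qed
  have Eeq: "(\<lambda>e. \<phi> ` e) ` spT g h j = (\<lambda>s. {pp1 s, pp1 (Suc s)}) ` {..<g} \<union> (\<lambda>s. {pp2 s, pp2 (Suc s)}) ` {..<h}
           \<union> (\<lambda>s. {pp3 s, pp3 (Suc s)}) ` {..<j}"
    unfolding spT_def image_Un E1 E2 E3 ..
  have phiN: "n \<le> N \<Longrightarrow> \<phi> n = (if n = 0 then emb1 u else if n < g then Inr (1, g - n) else if n = g then c
      else if n < g + j then Inr (3, n - g) else if n = g + j then Inl (Inr (Inr ()))
      else if n < N then Inr (2, n - g - j) else emb2 v)" for n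
    unfolding \<phi>_def pp1_def pp2_def pp3_def w3_def emb1_def N_def using h0
    by (auto simp: pathpt_def)
  have pres: "pres ((VG, EG), u) ((VH, EH), v) N (spT g h j) (star g h j ((VG, EG), u) ((VH, EH), v) K1) emb1 emb2 \<phi>"
    unfolding pres_def fst_conv snd_conv
  proof (intro conjI)
    show "inj_on emb1 VG" unfolding emb1_def c_def by (auto simp: inj_on_def)
    show "inj_on emb2 VH" unfolding emb2_def by (auto simp: inj_on_def)
    show "inj_on \<phi> {0..N}"
    proof (rule inj_onI)
      fix a b assume "a \<in> {0..N}" "b \<in> {0..N}" "\<phi> a = \<phi> b"
      then show "a = b" using phiN[of a] phiN[of b] h0
        unfolding emb1_def emb2_def c_def by (auto simp: N_def split: if_splits)
    qed
    show "\<phi> 0 = emb1 u" using phiN[of 0] by simp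
    show "\<phi> N = emb2 v" using phiN[of N] h0 by (simp add: N_def)
    show "\<forall>x\<in>VG. \<forall>n\<in>{0..N}. emb1 x = \<phi> n \<longrightarrow> n = 0"
    proof (intro ballI impI)
      fix x n assume "n \<in> {0..N}" "emb1 x = \<phi> n"
      then show "n = 0" using phiN[of n] h0
        unfolding emb1_def emb2_def c_def by (auto simp: N_def split: if_splits)
    qed
    show "\<forall>y\<in>VH. \<forall>n\<in>{0..N}. emb2 y = \<phi> n \<longrightarrow> n = N"
    proof (intro ballI impI)
      fix y n assume "n \<in> {0..N}" "emb2 y = \<phi> n"
      then show "n = N" using phiN[of n] h0
        unfolding emb1_def emb2_def c_def by (auto simp: N_def split: if_splits)
    qed
    show "\<forall>x\<in>VG. \<forall>y\<in>VH. emb1 x = emb2 y \<longrightarrow> x = u \<and> y = v \<and> N = 0"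
      unfolding emb1_def emb2_def c_def by auto
    show "star g h j ((VG, EG), u) ((VH, EH), v) K1 = (emb1 ` VG \<union> emb2 ` VH \<union> \<phi> ` {0..N},
      (\<lambda>e. emb1 ` e) ` EG \<union> (\<lambda>e. emb2 ` e) ` EH \<union> (\<lambda>e. \<phi> ` e) ` spT g h j)"
      unfolding unf Veq Eeq by (simp add: Un_assoc)
  qed
  have T: "\<forall>e\<in>spT g h j. e \<subseteq> {0..N}" unfolding spT_def N_def by auto
  show ?thesis using csf_CG[OF wG wH T pres] spT_lin[OF h] by (simp add: N_def)
qed

lemma sf_mult_comm: "sf_mult F G m = sf_mult G F m"
  unfolding sf_mult_def
  by (rule sum.reindex_bij_witness[where i="\<lambda>(a, b). (b, a)" and j="\<lambda>(a, b). (b, a)"])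
     (auto simp: add.commute mult.commute)

lemma pend_K1_path: "csf (pend K1 b) = csf (path_graph (Suc b))"
proof -
  have p: "pres K1 K1 b (pathE b) (path_graph (Suc b)) (\<lambda>_. 0) (\<lambda>_. b) id"
    unfolding pres_def K1_def fst_conv snd_conv
  proof (intro conjI)
    show "path_graph (Suc b) = ((\<lambda>_. 0) ` {()} \<union> (\<lambda>_. b) ` {()} \<union> id ` {0..b},
      (\<lambda>e. (\<lambda>_. 0) ` e) ` {} \<union> (\<lambda>e. (\<lambda>_. b) ` e) ` {} \<union> (\<lambda>e. id ` e) ` pathE b)"
      unfolding path_graph_def pathE_def by auto
  qed auto
  show ?thesis unfolding pend_def by (rule csf_Pk[OF wf_K1 wf_K1 p, symmetric])
qed

theorem corollary4p3:
  fixes G :: "'a rgraph" and H :: "'b rgraph" and g h j :: nat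
  assumes "wf_rgraph G" and "wf_rgraph H" and "h \<ge> 1"
  shows "(csf (S2 g h j G H) =
           (\<lambda>m. (\<Sum>i = 0..j. sf_mult (csf (path_graph i)) (csf (Pk (g + h + j - i) G H)) m)
              - (\<Sum>i = 1..j. sf_mult (csf (pend G (g + i - 1))) (csf (pend H (h + j - i))) m)))
         \<and> (csf (S1 g h j G) =
           (\<lambda>m. (\<Sum>i = 0..j. sf_mult (csf (path_graph i)) (csf (pend G (g + j - i + h))) m)
              - (\<Sum>i = 1..j. sf_mult (csf (path_graph (i + h))) (csf (pend G (g + j - i))) m)))"
proof -
  obtain VG EG u where G: "G = ((VG, EG), u)" by (metis prod.collapse)
  obtain VH EH v where H: "H = ((VH, EH), v)" by (metis prod.collapse)
  have wG: "wf_rgraph ((VG, EG), u)" and wH: "wf_rgraph ((VH, EH), v)" using assms G H by simp_all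
  have h: "h \<ge> 1" by (rule assms(3))
  have gen: "csf (S2 g h j ((VG, EG), u) H') = RHS ((VG, EG), u) H' g h j"
    if wH': "wf_rgraph H'" for H' :: "'c rgraph"
  proof -
    obtain VH' EH' v' where H': "H' = ((VH', EH'), v')" by (metis prod.collapse)
    show ?thesis unfolding S2_def H' using star_csf[OF wG wH'[unfolded H'] h] main_CG[OF wG wH'[unfolded H'] h]
      by simp
  qed
  have part1: "csf (S2 g h j G H) = RHS G H g h j" using gen[OF assms(2)] G by simp
  have part2: "csf (S1 g h j G) = RHS G K1 g h j"
    using gen[OF wf_K1] G by (simp add: S1_def S2_def)
  have rhs2: "RHS G K1 g h j =
           (\<lambda>m. (\<Sum>i = 0..j. sf_mult (csf (path_graph i)) (csf (pend G (g + j - i + h))) m)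
              - (\<Sum>i = 1..j. sf_mult (csf (path_graph (i + h))) (csf (pend G (g + j - i))) m))"
  proof
    fix m
    have s1: "(\<Sum>i = 0..j. sf_mult (csf (path_graph i)) (csf (Pk (g + h + j - i) G K1)) m)
        = (\<Sum>i = 0..j. sf_mult (csf (path_graph i)) (csf (pend G (g + j - i + h))) m)"
      unfolding pend_def by (rule sum.cong) (auto simp: add.commute add.left_commute)
    have "(\<Sum>i = 1..j. sf_mult (csf (pend G (g + i - 1))) (csf (pend K1 (h + j - i))) m)
        = (\<Sum>i = 1..j. sf_mult (csf (pend G (g + (j + 1 - i) - 1))) (csf (pend K1 (h + j - (j + 1 - i)))) m)"
      by (subst sum.atLeastAtMost_rev) simp
    also have "\<dots> = (\<Sum>i = 1..j. sf_mult (csf (path_graph (i + h))) (csf (pend G (g + j - i))) m)"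
    proof (rule sum.cong)
      fix i assume i: "i \<in> {1..j}"
      have a: "g + (j + 1 - i) - 1 = g + j - i" and b: "Suc (h + j - (j + 1 - i)) = i + h" using i by auto
      show "sf_mult (csf (pend G (g + (j + 1 - i) - 1))) (csf (pend K1 (h + j - (j + 1 - i)))) m
          = sf_mult (csf (path_graph (i + h))) (csf (pend G (g + j - i))) m"
        unfolding a pend_K1_path b by (rule sf_mult_comm)
    qed simp
    finally have s2: "(\<Sum>i = 1..j. sf_mult (csf (pend G (g + i - 1))) (csf (pend K1 (h + j - i))) m)
        = (\<Sum>i = 1..j. sf_mult (csf (path_graph (i + h))) (csf (pend G (g + j - i))) m)" .
    show "RHS G K1 g h j m = (\<Sum>i = 0..j. sf_mult (csf (path_graph i)) (csf (pend G (g + j - i + h))) m)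
              - (\<Sum>i = 1..j. sf_mult (csf (path_graph (i + h))) (csf (pend G (g + j - i))) m)"
      unfolding RHS_def s1 s2 ..
  qed
  show ?thesis using part1 part2 rhs2 unfolding RHS_def by simp
qed

end
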